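(* Let $A\subseteq\mathbb{N}$ be an essential $\mathcal{CR}$-set in $(\mathbb{N},+)$ and let $l\in\mathbb{N}$. Then the set $$\{(a,b)\in\mathbb{N}\times\mathbb{N}:\ \{a,a+b,a+2b,\ldots,a+lb\}\subseteq A\}$$ is an essential $\mathcal{CR}$-set in $(\mathbb{N}\times\mathbb{N},+)$ (with coordinatewise addition).
   Context: For a commutative semigroup $(S,+)$ and $r,n\in\mathbb{N}$, let $S^{r\times n}$ denote the set of $r\times n$ matrices with entries in $S$; for $M=(M_{ij})\in S^{r\times n}$ and non-empty $\alpha\subseteq\{1,\ldots,r\}$ write $M_{\alpha j}=\sum_{i\in\alpha}M_{ij}$. A subset $A\subseteq S$ is a $\mathcal{CR}$-set if for every $n\in\mathbb{N}$ there exists $r\in\mathbb{N}$ such that for every $M\in S^{r\times n}$ there exist a non-empty $\alpha\subseteq\{1,\ldots,r\}$ and $s\in S$ with $s+M_{\alpha j}\in A$ for all $j\in\{1,\ldots,n\}$. Let $\beta S$ be the Stone–Čech compactification of the discrete semigroup $S$, viewed as the set of ultrafilters on $S$, with the extended operation given by: for $p,q\in\beta S$ and $B\subseteq S$, $B\in p+q$ iff $\{x\in S:-x+B\in q\}\in p$, where $-x+B=\{y\in S:x+y\in B\}$. Let $\beta(\mathcal{CR})=\{p\in\beta S:\text{every member of }p\text{ is a }\mathcal{CR}\text{-set}\}$; this is a closed subsemigroup of $\beta S$. A set $A\subseteq S$ is an essential $\mathcal{CR}$-set if $A\in p$ for some idempotent $p=p+p$ in $\beta(\mathcal{CR})$.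 *)

theory Defs
  imports Main "HOL-Library.Product_Plus"
begin

text \<open>A commutative semigroup is given as a carrier set S (closed under +) inside a type
of class comm_monoid_add; the ambient zero is only used to make finite sums available and
never needs to lie in S.\<close>

definition CR_set :: "'a::comm_monoid_add set \<Rightarrow> 'a set \<Rightarrow> bool" where
  "CR_set S A \<longleftrightarrow> A \<subseteq> S \<and>
     (\<forall>n::nat. n \<ge> 1 \<longrightarrow> (\<exists>r::nat. r \<ge> 1 \<and>
        (\<forall>M :: nat \<Rightarrow> nat \<Rightarrow> 'a. (\<forall>i<r. \<forall>j<n. M i j \<in> S) \<longrightarrow>
           (\<exists>\<alpha>. \<alpha> \<noteq> {} \<and> \<alpha> \<subseteq> {..<r} \<and>
              (\<exists>s\<in>S. \<forall>j<n. s + (\<Sum>i\<in>\<alpha>. M i j) \<in> A)))))"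

definition ultrafilter_on :: "'a set \<Rightarrow> 'a set set \<Rightarrow> bool" where
  "ultrafilter_on S p \<longleftrightarrow>
     (\<forall>B\<in>p. B \<subseteq> S) \<and> S \<in> p \<and> {} \<notin> p \<and>
     (\<forall>B C. B \<in> p \<and> B \<subseteq> C \<and> C \<subseteq> S \<longrightarrow> C \<in> p) \<and>
     (\<forall>B C. B \<in> p \<and> C \<in> p \<longrightarrow> B \<inter> C \<in> p) \<and>
     (\<forall>B. B \<subseteq> S \<longrightarrow> B \<in> p \<or> S - B \<in> p)"

definition uf_plus :: "'a::plus set \<Rightarrow> 'a set set \<Rightarrow> 'a set set \<Rightarrow> 'a set set" where
  "uf_plus S p q = {B. B \<subseteq> S \<and> {x\<in>S. {y\<in>S. x + y \<in> B} \<in> q} \<in> p}"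

definition beta_CR :: "'a::comm_monoid_add set \<Rightarrow> 'a set set set" where
  "beta_CR S = {p. ultrafilter_on S p \<and> (\<forall>B\<in>p. CR_set S B)}"

definition essential_CR :: "'a::comm_monoid_add set \<Rightarrow> 'a set \<Rightarrow> bool" where
  "essential_CR S A \<longleftrightarrow> (\<exists>p\<in>beta_CR S. uf_plus S p p = p \<and> A \<in> p)"

definition posnat :: "nat set" where
  "posnat = {n. n \<ge> 1}"

end

theory Submission
  imports Defs "HOL-Library.FuncSet"
begin

definition words :: "nat set \<Rightarrow> nat \<Rightarrow> (nat \<Rightarrow> nat) set" where
  "words I k = PiE I (\<lambda>_. {..<k})"

definition lin :: "nat set \<Rightarrow> nat set \<Rightarrow> (nat \<Rightarrow> nat) \<Rightarrow> nat \<Rightarrow> (nat \<Rightarrow> nat)" where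
  "lin I \<gamma> f t = restrict (\<lambda>i. if i \<in> \<gamma> then t else f i) I"

definition merge :: "nat set \<Rightarrow> nat set \<Rightarrow> (nat \<Rightarrow> nat) \<Rightarrow> (nat \<Rightarrow> nat) \<Rightarrow> (nat \<Rightarrow> nat)" where
  "merge I I1 x y = restrict (\<lambda>i. if i \<in> I1 then x i else y i) I"

definition monoL :: "nat set \<Rightarrow> nat \<Rightarrow> ((nat \<Rightarrow> nat) \<Rightarrow> nat) \<Rightarrow> bool" where
  "monoL I k c \<longleftrightarrow> (\<exists>\<gamma> f. \<gamma> \<subseteq> I \<and> \<gamma> \<noteq> {} \<and> f \<in> words I k \<and> (\<forall>t<k. c (lin I \<gamma> f t) = c (lin I \<gamma> f 0)))"

definition focused :: "nat \<Rightarrow> nat set \<Rightarrow> ((nat \<Rightarrow> nat) \<Rightarrow> nat) \<Rightarrow> nat \<Rightarrow> bool" where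
  "focused k I c s \<longleftrightarrow> (\<exists>z\<in>words I (Suc k). \<exists>\<Gamma> F. (\<forall>j<s. \<Gamma> j \<subseteq> I \<and> \<Gamma> j \<noteq> {} \<and> F j \<in> words I (Suc k) \<and>
          lin I (\<Gamma> j) (F j) k = z \<and> (\<forall>t<k. c (lin I (\<Gamma> j) (F j) t) = c (lin I (\<Gamma> j) (F j) 0)))
        \<and> inj_on (\<lambda>j. c (lin I (\<Gamma> j) (F j) 0)) {..<s})"

definition HJ_prop :: "nat \<Rightarrow> nat \<Rightarrow> nat \<Rightarrow> bool" where
  "HJ_prop k r N \<longleftrightarrow> (\<forall>I c. finite I \<longrightarrow> card I = N \<longrightarrow> (\<forall>w\<in>words I k. c w < r) \<longrightarrow> monoL I k c)"

definition FL_prop :: "nat \<Rightarrow> nat \<Rightarrow> nat \<Rightarrow> nat \<Rightarrow> bool" where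
  "FL_prop k r s n \<longleftrightarrow> (\<forall>I c. finite I \<longrightarrow> card I = n \<longrightarrow> (\<forall>w\<in>words I (Suc k). c w < r) \<longrightarrow>
     monoL I (Suc k) c \<or> focused k I c s)"

lemma lin_words: "f \<in> words I k \<Longrightarrow> t < k \<Longrightarrow> lin I \<gamma> f t \<in> words I k"
  by (auto simp: words_def lin_def PiE_def Pi_def)

lemma words_mono: "f \<in> words I k \<Longrightarrow> k \<le> k' \<Longrightarrow> f \<in> words I k'"
  by (auto simp: words_def PiE_def Pi_def)

lemma merge_words: "I1 \<subseteq> I \<Longrightarrow> x \<in> words I1 k \<Longrightarrow> y \<in> words (I - I1) k \<Longrightarrow> merge I I1 x y \<in> words I k"
  by (auto simp: words_def merge_def PiE_def Pi_def)

lemma lin_merge: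
  assumes "\<gamma>1 \<subseteq> I1" "\<gamma>2 \<subseteq> I - I1" "I1 \<subseteq> I"
  shows "lin I (\<gamma>1 \<union> \<gamma>2) (merge I I1 g1 g2) t = merge I I1 (lin I1 \<gamma>1 g1 t) (lin (I - I1) \<gamma>2 g2 t)"
  using assms by (auto simp: lin_def merge_def fun_eq_iff)

lemma lin_merge1:
  assumes "\<gamma>1 \<subseteq> I1" "I1 \<subseteq> I"
  shows "lin I \<gamma>1 (merge I I1 g1 y) t = merge I I1 (lin I1 \<gamma>1 g1 t) y"
  using assms by (auto simp: lin_def merge_def fun_eq_iff)

lemma lin_merge2:
  assumes "\<gamma>2 \<subseteq> I - I1" "I1 \<subseteq> I"
  shows "lin I \<gamma>2 (merge I I1 x g2) t = merge I I1 x (lin (I - I1) \<gamma>2 g2 t)"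
  using assms by (auto simp: lin_def merge_def fun_eq_iff)

lemma card_words: "finite I \<Longrightarrow> card (words I k) = k ^ card I"
  by (simp add: words_def card_PiE)

lemma finite_words: "finite I \<Longrightarrow> finite (words I k)"
  by (simp add: words_def finite_PiE)

lemma words_nonempty: "k > 0 \<Longrightarrow> words I k \<noteq> {}"
  by (auto simp: words_def PiE_eq_empty_iff)

lemma HJ_base: "HJ_prop (Suc 0) r 1"
  unfolding HJ_prop_def monoL_def
proof (intro allI impI)
  fix I :: "nat set" and c :: "(nat \<Rightarrow> nat) \<Rightarrow> nat"
  assume "finite I" "card I = 1"
  then obtain i where I: "I = {i}" by (auto simp: card_Suc_eq)
  show "\<exists>\<gamma> f. \<gamma> \<subseteq> I \<and> \<gamma> \<noteq> {} \<and> f \<in> words I (Suc 0) \<and> (\<forall>t<Suc 0. c (lin I \<gamma> f t) = c (lin I \<gamma> f 0))"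
    by (rule exI[of _ I], rule exI[of _ "restrict (\<lambda>_. 0) I"]) (auto simp: I words_def)
qed

lemma FL:
  assumes HJk: "\<forall>R. \<exists>N. HJ_prop k R N"
  shows "\<exists>n. FL_prop k r s n"
proof (induction s)
  case 0
  show ?case
  proof (rule exI[of _ 0], unfold FL_prop_def, intro allI impI disjI2)
    fix I :: "nat set" and c :: "(nat \<Rightarrow> nat) \<Rightarrow> nat"
    obtain z where "z \<in> words I (Suc k)" using words_nonempty[of "Suc k" I] by blast
    then show "focused k I c 0" unfolding focused_def
      by (intro bexI[of _ z] exI[of _ "\<lambda>_. {}"] exI[of _ "\<lambda>_. z"]) simp_all
  qed
next
  case (Suc s)
  then obtain n where FLn: "FL_prop k r s n" by blast
  define R where "R = r ^ (Suc k ^ n)"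
  obtain m where HJm: "HJ_prop k R m" using HJk by blast
  show ?case
  proof (rule exI[of _ "m + n"], unfold FL_prop_def, intro allI impI)
    fix I :: "nat set" and c :: "(nat \<Rightarrow> nat) \<Rightarrow> nat"
    assume finI: "finite I" and cardI: "card I = m + n" and col: "\<forall>w\<in>words I (Suc k). c w < r"
    obtain I1 where I1: "I1 \<subseteq> I" "card I1 = m" "finite I1"
      using obtain_subset_with_card_n[of m I] cardI by auto
    define I2 where "I2 = I - I1"
    have finI2: "finite I2" using finI by (simp add: I2_def)
    have cardI2: "card I2 = n" using I1 cardI finI by (simp add: I2_def card_Diff_subset)
    define \<Phi> where "\<Phi> = PiE (words I2 (Suc k)) (\<lambda>_. {..<r})"
    have finPhi: "finite \<Phi>" using finI2 by (simp add: \<Phi>_def finite_PiE finite_words)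
    have cardPhi: "card \<Phi> = R"
      using finI2 by (simp add: \<Phi>_def card_PiE finite_words card_words cardI2 R_def)
    obtain enc where enc: "bij_betw enc \<Phi> {0..<R}"
      using ex_bij_betw_finite_nat[OF finPhi] cardPhi by auto
    define col1 where "col1 x = enc (restrict (\<lambda>y. c (merge I I1 x y)) (words I2 (Suc k)))" for x
    have inPhi: "restrict (\<lambda>y. c (merge I I1 x y)) (words I2 (Suc k)) \<in> \<Phi>" if "x \<in> words I1 (Suc k)" for x
      using that col merge_words[OF I1(1)] by (auto simp: \<Phi>_def I2_def)
    have col1b: "\<forall>w\<in>words I1 k. col1 w < R"
    proof
      fix w assume "w \<in> words I1 k"
      then have "w \<in> words I1 (Suc k)" by (rule words_mono) simp
      then show "col1 w < R" using inPhi enc by (auto simp: col1_def bij_betw_def)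
    qed
    have "monoL I1 k col1" using HJm I1(3) I1(2) col1b unfolding HJ_prop_def by blast
    then obtain \<gamma>1 g1 where \<gamma>1: "\<gamma>1 \<subseteq> I1" "\<gamma>1 \<noteq> {}" "g1 \<in> words I1 k"
      and mono1: "\<forall>t<k. col1 (lin I1 \<gamma>1 g1 t) = col1 (lin I1 \<gamma>1 g1 0)"
      unfolding monoL_def by blast
    have g1s: "g1 \<in> words I1 (Suc k)" using \<gamma>1(3) by (rule words_mono) simp
    define x0 where "x0 = lin I1 \<gamma>1 g1 0"
    have star: "c (merge I I1 (lin I1 \<gamma>1 g1 t) y) = c (merge I I1 x0 y)"
      if "t < k" "y \<in> words I2 (Suc k)" for t y
    proof -
      have a: "lin I1 \<gamma>1 g1 t \<in> words I1 (Suc k)" using lin_words[OF g1s, of t] that by simp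
      have b: "x0 \<in> words I1 (Suc k)" using lin_words[OF g1s, of 0] by (simp add: x0_def)
      have "col1 (lin I1 \<gamma>1 g1 t) = col1 x0" using mono1 that unfolding x0_def by blast
      then have "restrict (\<lambda>y. c (merge I I1 (lin I1 \<gamma>1 g1 t) y)) (words I2 (Suc k))
            = restrict (\<lambda>y. c (merge I I1 x0 y)) (words I2 (Suc k))"
        using enc inPhi[OF a] inPhi[OF b] unfolding col1_def bij_betw_def inj_on_def by blast
      then show ?thesis using that(2) by (metis restrict_apply')
    qed
    have x0w: "x0 \<in> words I1 (Suc k)" using lin_words[OF g1s, of 0] by (simp add: x0_def)
    define c' where "c' y = c (merge I I1 x0 y)" for y
    have c'b: "\<forall>w\<in>words I2 (Suc k). c' w < r"
      using col merge_words[OF I1(1) x0w] by (auto simp: c'_def I2_def)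
    have I2I: "I2 \<subseteq> I" by (auto simp: I2_def)
    have disj: "monoL I2 (Suc k) c' \<or> focused k I2 c' s"
      using FLn finI2 cardI2 c'b unfolding FL_prop_def by blast
    have liftA: "monoL I (Suc k) c"
      if "\<gamma>2 \<subseteq> I2" "\<gamma>2 \<noteq> {}" "f2 \<in> words I2 (Suc k)" "\<forall>t<Suc k. c' (lin I2 \<gamma>2 f2 t) = c' (lin I2 \<gamma>2 f2 0)" for \<gamma>2 f2
      unfolding monoL_def
    proof (intro exI conjI)
      show "\<gamma>2 \<subseteq> I" "\<gamma>2 \<noteq> {}" using that(1,2) I2I by auto
      show "merge I I1 x0 f2 \<in> words I (Suc k)" using merge_words[OF I1(1) x0w] that(3) by (simp add: I2_def)
      show "\<forall>t<Suc k. c (lin I \<gamma>2 (merge I I1 x0 f2) t) = c (lin I \<gamma>2 (merge I I1 x0 f2) 0)"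
      proof (intro allI impI)
        fix t assume t: "t < Suc k"
        have e: "lin I \<gamma>2 (merge I I1 x0 f2) t' = merge I I1 x0 (lin I2 \<gamma>2 f2 t')" for t'
          using lin_merge2[of \<gamma>2 I I1, OF _ I1(1)] that(1) by (simp add: I2_def)
        have "c' (lin I2 \<gamma>2 f2 t) = c' (lin I2 \<gamma>2 f2 0)" using that(4) t by blast
        then show "c (lin I \<gamma>2 (merge I I1 x0 f2) t) = c (lin I \<gamma>2 (merge I I1 x0 f2) 0)"
          unfolding e c'_def .
      qed
    qed
    show "monoL I (Suc k) c \<or> focused k I c (Suc s)"
    proof (cases "monoL I2 (Suc k) c'")
      case True
      then show ?thesis using liftA unfolding monoL_def by blast
    next
      case False
      then have "focused k I2 c' s" using disj by blast
      then obtain z2 \<Gamma> F where z2: "z2 \<in> words I2 (Suc k)"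
        and L: "\<forall>j<s. \<Gamma> j \<subseteq> I2 \<and> \<Gamma> j \<noteq> {} \<and> F j \<in> words I2 (Suc k) \<and>
          lin I2 (\<Gamma> j) (F j) k = z2 \<and> (\<forall>t<k. c' (lin I2 (\<Gamma> j) (F j) t) = c' (lin I2 (\<Gamma> j) (F j) 0))"
        and inj: "inj_on (\<lambda>j. c' (lin I2 (\<Gamma> j) (F j) 0)) {..<s}"
        unfolding focused_def by blast
      have L\<Gamma>: "\<And>j. j < s \<Longrightarrow> \<Gamma> j \<subseteq> I2" and Lne: "\<And>j. j < s \<Longrightarrow> \<Gamma> j \<noteq> {}"
        and LF: "\<And>j. j < s \<Longrightarrow> F j \<in> words I2 (Suc k)"
        and Lz: "\<And>j. j < s \<Longrightarrow> lin I2 (\<Gamma> j) (F j) k = z2"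
        and Lc: "\<And>j t. j < s \<Longrightarrow> t < k \<Longrightarrow> c' (lin I2 (\<Gamma> j) (F j) t) = c' (lin I2 (\<Gamma> j) (F j) 0)"
        using L by blast+
      show ?thesis
      proof (cases "\<exists>j<s. c' z2 = c' (lin I2 (\<Gamma> j) (F j) 0)")
        case True
        then obtain j where j: "j < s" "c' z2 = c' (lin I2 (\<Gamma> j) (F j) 0)" by blast
        have "\<forall>t<Suc k. c' (lin I2 (\<Gamma> j) (F j) t) = c' (lin I2 (\<Gamma> j) (F j) 0)"
        proof (intro allI impI)
          fix t assume "t < Suc k"
          then consider "t < k" | "t = k" by linarith
          then show "c' (lin I2 (\<Gamma> j) (F j) t) = c' (lin I2 (\<Gamma> j) (F j) 0)"
          proof cases
            case 1 then show ?thesis using Lc[OF j(1)] by blast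
          next
            case 2 then show ?thesis using Lz[OF j(1)] j(2) by simp
          qed
        qed
        then show ?thesis using liftA[of "\<Gamma> j" "F j"] L\<Gamma> Lne LF j by blast
      next
        case False
        define \<Gamma>' where "\<Gamma>' j = (if j < s then \<gamma>1 \<union> \<Gamma> j else \<gamma>1)" for j
        define F' where "F' j = (if j < s then merge I I1 g1 (F j) else merge I I1 g1 z2)" for j
        define z where "z = merge I I1 (lin I1 \<gamma>1 g1 k) z2"
        have linj: "lin I (\<Gamma>' j) (F' j) t = merge I I1 (lin I1 \<gamma>1 g1 t) (lin I2 (\<Gamma> j) (F j) t)"
          if "j < s" for j t
          using lin_merge[of \<gamma>1 I1 "\<Gamma> j" I g1 "F j" t] that L\<Gamma> \<gamma>1 I1 by (simp add: \<Gamma>'_def F'_def I2_def)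
        have lins: "lin I (\<Gamma>' s) (F' s) t = merge I I1 (lin I1 \<gamma>1 g1 t) z2" for t
          using lin_merge1[of \<gamma>1 I1 I g1 z2 t] \<gamma>1 I1 by (simp add: \<Gamma>'_def F'_def)
        have colj: "c (lin I (\<Gamma>' j) (F' j) 0) = (if j < s then c' (lin I2 (\<Gamma> j) (F j) 0) else c' z2)"
          if "j < Suc s" for j
        proof (cases "j < s")
          case True then show ?thesis using linj by (simp add: c'_def x0_def)
        next
          case False then have "j = s" using that by simp
          then show ?thesis using lins by (simp add: c'_def x0_def)
        qed
        have zw: "z \<in> words I (Suc k)"
          unfolding z_def by (rule merge_words[OF I1(1) lin_words[OF g1s] z2[unfolded I2_def]]) simp
        have P1: "\<forall>j<Suc s. \<Gamma>' j \<subseteq> I \<and> \<Gamma>' j \<noteq> {} \<and> F' j \<in> words I (Suc k) \<and>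
          lin I (\<Gamma>' j) (F' j) k = z \<and> (\<forall>t<k. c (lin I (\<Gamma>' j) (F' j) t) = c (lin I (\<Gamma>' j) (F' j) 0))"
        proof (intro allI impI conjI)
          fix j assume j: "j < Suc s"
          show "\<Gamma>' j \<subseteq> I" "\<Gamma>' j \<noteq> {}" using L\<Gamma>[of j] j \<gamma>1 I1 I2I by (auto simp: \<Gamma>'_def)
          show "F' j \<in> words I (Suc k)"
            using LF merge_words[OF I1(1) g1s] z2 by (auto simp: F'_def I2_def)
          show "lin I (\<Gamma>' j) (F' j) k = z"
          proof (cases "j < s")
            case True then show ?thesis using linj Lz by (simp add: z_def)
          next
            case False then have "j = s" using j by simp
            then show ?thesis using lins by (simp add: z_def)
          qed
          fix t assume t: "t < k"
          show "c (lin I (\<Gamma>' j) (F' j) t) = c (lin I (\<Gamma>' j) (F' j) 0)"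
          proof (cases "j < s")
            case True
            have lw: "lin I2 (\<Gamma> j) (F j) t \<in> words I2 (Suc k)" using LF[OF True] t lin_words by simp
            have "c (lin I (\<Gamma>' j) (F' j) t) = c' (lin I2 (\<Gamma> j) (F j) t)"
              using linj[OF True] star[OF t lw] by (simp add: c'_def)
            also have "\<dots> = c' (lin I2 (\<Gamma> j) (F j) 0)" using Lc[OF True t] .
            finally show ?thesis using colj j True by simp
          next
            case False then have "j = s" using j by simp
            then show ?thesis using lins star[OF t z2] colj j by (simp add: c'_def x0_def)
          qed
        qed
        have P2: "inj_on (\<lambda>j. c (lin I (\<Gamma>' j) (F' j) 0)) {..<Suc s}"
          unfolding inj_on_def
        proof (intro ballI impI)
          fix a b assume ab: "a \<in> {..<Suc s}" "b \<in> {..<Suc s}"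
            "c (lin I (\<Gamma>' a) (F' a) 0) = c (lin I (\<Gamma>' b) (F' b) 0)"
          show "a = b"
          proof (cases "a < s"; cases "b < s")
            assume "a < s" "b < s" then show ?thesis using ab colj[of a] colj[of b] inj by (simp add: inj_on_def)
          next
            assume "a < s" "\<not> b < s" then show ?thesis using ab colj[of a] colj[of b] False by (metis lessThan_iff)
          next
            assume "\<not> a < s" "b < s" then show ?thesis using ab colj[of a] colj[of b] False by (metis lessThan_iff)
          next
            assume "\<not> a < s" "\<not> b < s" then show ?thesis using ab by simp
          qed
        qed
        show ?thesis unfolding focused_def using zw P1 P2 by blast
      qed
    qed
  qed
qed

lemma HJ: "\<exists>N. HJ_prop (Suc k) r N"
proof (induction k arbitrary: r)
  case 0
  then show ?case using HJ_base by blast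
next
  case (Suc k)
  obtain n where FLn: "FL_prop (Suc k) r r n" using FL[of "Suc k" r r] Suc by blast
  have "HJ_prop (Suc (Suc k)) r n"
    unfolding HJ_prop_def
  proof (intro allI impI)
    fix I :: "nat set" and c :: "(nat \<Rightarrow> nat) \<Rightarrow> nat"
    assume fin: "finite I" and card: "card I = n" and col: "\<forall>w\<in>words I (Suc (Suc k)). c w < r"
    have "monoL I (Suc (Suc k)) c \<or> focused (Suc k) I c r"
      using FLn fin card col unfolding FL_prop_def by blast
    then show "monoL I (Suc (Suc k)) c"
    proof
      assume "focused (Suc k) I c r"
      then obtain z \<Gamma> F where z: "z \<in> words I (Suc (Suc k))"
        and L: "\<forall>j<r. \<Gamma> j \<subseteq> I \<and> \<Gamma> j \<noteq> {} \<and> F j \<in> words I (Suc (Suc k)) \<and>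
          lin I (\<Gamma> j) (F j) (Suc k) = z \<and> (\<forall>t<Suc k. c (lin I (\<Gamma> j) (F j) t) = c (lin I (\<Gamma> j) (F j) 0))"
        and inj: "inj_on (\<lambda>j. c (lin I (\<Gamma> j) (F j) 0)) {..<r}"
        unfolding focused_def by blast
      have L\<Gamma>: "\<And>j. j < r \<Longrightarrow> \<Gamma> j \<subseteq> I" and Lne: "\<And>j. j < r \<Longrightarrow> \<Gamma> j \<noteq> {}"
        and LF: "\<And>j. j < r \<Longrightarrow> F j \<in> words I (Suc (Suc k))"
        and Lz: "\<And>j. j < r \<Longrightarrow> lin I (\<Gamma> j) (F j) (Suc k) = z"
        and Lc: "\<And>j t. j < r \<Longrightarrow> t < Suc k \<Longrightarrow> c (lin I (\<Gamma> j) (F j) t) = c (lin I (\<Gamma> j) (F j) 0)"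
        using L by blast+
      define g where "g j = c (lin I (\<Gamma> j) (F j) 0)" for j
      have sub: "g ` {..<r} \<subseteq> {..<r}"
      proof
        fix x assume "x \<in> g ` {..<r}"
        then obtain j where "j < r" "x = g j" by auto
        then show "x \<in> {..<r}" using col lin_words[OF LF[of j], of 0] by (simp add: g_def)
      qed
      have "card (g ` {..<r}) = r" using inj card_image by (fastforce simp: g_def)
      then have eq: "g ` {..<r} = {..<r}"
        using sub by (metis card_lessThan card_subset_eq finite_lessThan)
      have "c z \<in> {..<r}" using col z by simp
      then obtain j where j: "j < r" "g j = c z" using eq by (metis imageE lessThan_iff)
      show "monoL I (Suc (Suc k)) c" unfolding monoL_def
      proof (intro exI conjI)
        show "\<Gamma> j \<subseteq> I" "\<Gamma> j \<noteq> {}" "F j \<in> words I (Suc (Suc k))" using L\<Gamma> Lne LF j by auto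
        show "\<forall>t<Suc (Suc k). c (lin I (\<Gamma> j) (F j) t) = c (lin I (\<Gamma> j) (F j) 0)"
        proof (intro allI impI)
          fix t assume "t < Suc (Suc k)"
          then consider "t < Suc k" | "t = Suc k" by linarith
          then show "c (lin I (\<Gamma> j) (F j) t) = c (lin I (\<Gamma> j) (F j) 0)"
          proof cases
            case 1 then show ?thesis using Lc[OF j(1)] by blast
          next
            case 2 then show ?thesis using Lz[OF j(1)] j(2) by (simp add: g_def)
          qed
        qed
      qed
    qed
  qed
  then show ?case by blast
qed


lemma sum_in_S:
  assumes cl: "\<forall>x\<in>S. \<forall>y\<in>S. x + y \<in> S" and "finite A" "A \<noteq> {}" "\<forall>a\<in>A. f a \<in> S"
  shows "sum f A \<in> S"
  using assms(2,3,4)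
proof (induction A rule: finite_ne_induct)
  case (singleton x) then show ?case by simp
next
  case (insert x F) then show ?case using cl by simp
qed

lemma add_sum_in_S:
  fixes S :: "'a::comm_monoid_add set"
  assumes cl: "\<forall>x\<in>S. \<forall>y\<in>S. x + y \<in> S" and "s \<in> S" "finite A" "\<forall>a\<in>A. f a \<in> S"
  shows "s + sum f A \<in> S"
  using assms(3,4)
proof (induction A rule: finite_induct)
  case empty then show ?case using assms(2) by simp
next
  case (insert x F)
  have P: "(s + sum f F) + f x \<in> S" using insert cl by simp
  have e: "s + sum f (insert x F) = (s + sum f F) + f x"
    using insert(1,2) by (simp add: add.commute add.left_commute)
  show ?case unfolding e by (rule P)
qed

lemma notCR_D:
  assumes "D \<subseteq> S" "\<not> CR_set S D"
  shows "\<exists>n\<ge>(1::nat). \<forall>r\<ge>(1::nat). \<exists>M. (\<forall>i<r. \<forall>j<n. M i j \<in> S) \<and>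
     (\<forall>\<alpha>. \<alpha> \<noteq> {} \<longrightarrow> \<alpha> \<subseteq> {..<r} \<longrightarrow> (\<forall>s\<in>S. \<exists>j<n. s + (\<Sum>i\<in>\<alpha>. M i j) \<notin> D))"
proof -
  from assms obtain n :: nat where n: "n \<ge> 1" and nr: "\<not> (\<exists>r::nat. r \<ge> 1 \<and>
        (\<forall>M :: nat \<Rightarrow> nat \<Rightarrow> 'a. (\<forall>i<r. \<forall>j<n. M i j \<in> S) \<longrightarrow>
           (\<exists>\<alpha>. \<alpha> \<noteq> {} \<and> \<alpha> \<subseteq> {..<r} \<and>
              (\<exists>s\<in>S. \<forall>j<n. s + (\<Sum>i\<in>\<alpha>. M i j) \<in> D))))"
    unfolding CR_set_def by auto
  show ?thesis
  proof (intro exI[of _ n] conjI allI impI)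
    show "n \<ge> 1" by (rule n)
    fix r :: nat assume r: "r \<ge> 1"
    then obtain M :: "nat \<Rightarrow> nat \<Rightarrow> 'a" where M1: "\<forall>i<r. \<forall>j<n. M i j \<in> S" and
      M2: "\<not> (\<exists>\<alpha>. \<alpha> \<noteq> {} \<and> \<alpha> \<subseteq> {..<r} \<and> (\<exists>s\<in>S. \<forall>j<n. s + (\<Sum>i\<in>\<alpha>. M i j) \<in> D))"
      using nr by auto
    show "\<exists>M. (\<forall>i<r. \<forall>j<n. M i j \<in> S) \<and>
     (\<forall>\<alpha>. \<alpha> \<noteq> {} \<longrightarrow> \<alpha> \<subseteq> {..<r} \<longrightarrow> (\<forall>s\<in>S. \<exists>j<n. s + (\<Sum>i\<in>\<alpha>. M i j) \<notin> D))"
      using M1 M2 by (intro exI[of _ M]) auto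
  qed
qed

lemma pair_inj:
  fixes r :: nat
  assumes "i < r" "i' < r" "i + r * k = i' + r * k'"
  shows "i = i' \<and> k = k'"
proof -
  have e1: "(i + r * k) mod r = i" using assms(1) by simp
  have e2: "(i' + r * k') mod r = i'" using assms(2) by simp
  have "i = (i + r * k) mod r" using e1 by simp
  also have "\<dots> = (i' + r * k') mod r" using assms(3) by (rule arg_cong)
  also have "\<dots> = i'" by (rule e2)
  finally have "i = i'" .
  moreover have "k = k'" using assms \<open>i = i'\<close> by simp
  ultimately show ?thesis by simp
qed

lemma PR:
  fixes S :: "'a::comm_monoid_add set"
  assumes cl: "\<forall>x\<in>S. \<forall>y\<in>S. x + y \<in> S"
    and D1: "D1 \<subseteq> S" "\<not> CR_set S D1" and D2: "D2 \<subseteq> S" "\<not> CR_set S D2"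
  shows "\<not> CR_set S (D1 \<union> D2)"
proof
  assume CR: "CR_set S (D1 \<union> D2)"
  obtain n1 :: nat where n1: "n1 \<ge> 1" and G1ex: "\<forall>r\<ge>(1::nat). \<exists>M. (\<forall>i<r. \<forall>j<n1. M i j \<in> S) \<and>
     (\<forall>\<alpha>. \<alpha> \<noteq> {} \<longrightarrow> \<alpha> \<subseteq> {..<r} \<longrightarrow> (\<forall>s\<in>S. \<exists>j<n1. s + (\<Sum>i\<in>\<alpha>. M i j) \<notin> D1))"
    using notCR_D[OF D1] by blast
  obtain n2 :: nat where n2: "n2 \<ge> 1" and G2ex: "\<forall>r\<ge>(1::nat). \<exists>M. (\<forall>i<r. \<forall>j<n2. M i j \<in> S) \<and>
     (\<forall>\<alpha>. \<alpha> \<noteq> {} \<longrightarrow> \<alpha> \<subseteq> {..<r} \<longrightarrow> (\<forall>s\<in>S. \<exists>j<n2. s + (\<Sum>i\<in>\<alpha>. M i j) \<notin> D2))"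
    using notCR_D[OF D2] by blast
  define m where "m = n1 * n2"
  have m1: "m \<ge> 1" using n1 n2 by (simp add: m_def)
  obtain N where HJN: "HJ_prop m 2 N"
    using HJ[of "m - 1" 2] m1 by (metis Suc_diff_1 less_le_trans zero_less_one)
  have N1: "N \<ge> 1"
  proof (rule ccontr)
    assume "\<not> N \<ge> 1"
    then have "N = 0" by simp
    then have "monoL {} m (\<lambda>_. 0)" using HJN unfolding HJ_prop_def by simp
    then show False unfolding monoL_def by blast
  qed
  define W where "W = words {..<N} m"
  have finW: "finite W" by (simp add: W_def finite_words)
  have neW: "W \<noteq> {}" using words_nonempty m1 by (simp add: W_def)
  obtain \<omega> where \<omega>: "bij_betw \<omega> {0..<card W} W" using ex_bij_betw_nat_finite[OF finW] by blast
  have cW: "card W \<ge> 1" using finW neW by (simp add: Suc_le_eq card_gt_0_iff)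
  obtain r :: nat where r: "r \<ge> 1" and rprop: "\<forall>M. (\<forall>i<r. \<forall>j<card W. M i j \<in> S) \<longrightarrow>
           (\<exists>\<alpha>. \<alpha> \<noteq> {} \<and> \<alpha> \<subseteq> {..<r} \<and>
              (\<exists>s\<in>S. \<forall>j<card W. s + (\<Sum>i\<in>\<alpha>. M i j) \<in> D1 \<union> D2))"
    using CR cW unfolding CR_set_def by blast
  have rN: "r * N \<ge> 1" using r N1 by simp
  obtain G1 where G1S: "\<forall>i<r*N. \<forall>j<n1. G1 i j \<in> S" and G1f: "\<forall>\<alpha>. \<alpha> \<noteq> {} \<longrightarrow> \<alpha> \<subseteq> {..<r*N} \<longrightarrow> (\<forall>s\<in>S. \<exists>j<n1. s + (\<Sum>i\<in>\<alpha>. G1 i j) \<notin> D1)"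
    using G1ex[THEN spec[of _ "r*N"], THEN mp, OF rN] by (elim exE conjE)
  obtain G2 where G2S: "\<forall>i<r*N. \<forall>j<n2. G2 i j \<in> S" and G2f: "\<forall>\<alpha>. \<alpha> \<noteq> {} \<longrightarrow> \<alpha> \<subseteq> {..<r*N} \<longrightarrow> (\<forall>s\<in>S. \<exists>j<n2. s + (\<Sum>i\<in>\<alpha>. G2 i j) \<notin> D2)"
    using G2ex[THEN spec[of _ "r*N"], THEN mp, OF rN] by (elim exE conjE)
  define g where "g i k v = G1 (i + r * k) (v mod n1) + G2 (i + r * k) (v div n1)" for i k v
  define H where "H i w = (\<Sum>k<N. g i k (w k))" for i w
  have idx: "i + r * k < r * N" if "i < r" "k < N" for i k
  proof -
    have "i + r * k < r + r * k" using that by simp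
    also have "\<dots> = r * (k + 1)" by simp
    also have "\<dots> \<le> r * N" using that by (intro mult_le_mono2) simp
    finally show ?thesis .
  qed
  have gS: "g i k v \<in> S" if "i < r" "k < N" "v < m" for i k v
  proof -
    have "v mod n1 < n1" using n1 by simp
    moreover have "v div n1 < n2" using that(3) n1 by (simp add: m_def less_mult_imp_div_less mult.commute)
    ultimately show ?thesis using G1S G2S idx[OF that(1,2)] cl by (simp add: g_def)
  qed
  have HS: "H i w \<in> S" if "i < r" "w \<in> W" for i w
    unfolding H_def
  proof (rule sum_in_S[OF cl])
    show "finite {..<N}" by simp
    show "{..<N} \<noteq> {}" using N1 by (simp add: lessThan_empty_iff)
    show "\<forall>k\<in>{..<N}. g i k (w k) \<in> S"
    proof
      fix k assume k: "k \<in> {..<N}"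
      then have "w k < m" using that(2) by (auto simp: W_def words_def PiE_iff)
      then show "g i k (w k) \<in> S" using gS that(1) k by simp
    qed
  qed
  define M where "M i j = H i (\<omega> j)" for i j
  have MS: "\<forall>i<r. \<forall>j<card W. M i j \<in> S"
  proof (intro allI impI)
    fix i j assume "i < r" "j < card W"
    moreover have "\<omega> j \<in> W" using \<omega> \<open>j < card W\<close> by (auto simp: bij_betw_def)
    ultimately show "M i j \<in> S" using HS by (simp add: M_def)
  qed
  obtain \<alpha> s where \<alpha>: "\<alpha> \<noteq> {}" "\<alpha> \<subseteq> {..<r}" and sS: "s \<in> S"
    and sprop: "\<forall>j<card W. s + (\<Sum>i\<in>\<alpha>. M i j) \<in> D1 \<union> D2"
    using rprop[THEN spec[of _ M], THEN mp, OF MS] by (elim exE conjE bexE)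
  have finA: "finite \<alpha>" using \<alpha>(2) finite_subset by blast
  have inD: "s + (\<Sum>i\<in>\<alpha>. H i w) \<in> D1 \<union> D2" if "w \<in> W" for w
  proof -
    have "w \<in> \<omega> ` {0..<card W}" using \<omega> that by (simp add: bij_betw_def)
    then obtain j where "j < card W" "\<omega> j = w" by auto
    then show ?thesis using sprop by (auto simp: M_def)
  qed
  define c where "c w = (if s + (\<Sum>i\<in>\<alpha>. H i w) \<in> D1 then 0 else 1::nat)" for w
  have "monoL {..<N} m c" using HJN unfolding HJ_prop_def by (auto simp: c_def)
  then obtain \<gamma> f where \<gamma>: "\<gamma> \<subseteq> {..<N}" "\<gamma> \<noteq> {}" and fW: "f \<in> words {..<N} m"
    and monoc: "\<forall>t<m. c (lin {..<N} \<gamma> f t) = c (lin {..<N} \<gamma> f 0)"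
    unfolding monoL_def by blast
  define C where "C = (\<Sum>p\<in>\<alpha> \<times> ({..<N} - \<gamma>). g (fst p) (snd p) (f (snd p)))"
  define \<beta> where "\<beta> = (\<lambda>p. fst p + r * snd p) ` (\<alpha> \<times> \<gamma>)"
  have finG: "finite \<gamma>" using \<gamma>(1) finite_subset by blast
  have injb: "inj_on (\<lambda>p. fst p + r * snd p) (\<alpha> \<times> \<gamma>)"
  proof (rule inj_onI)
    fix p q assume pq: "p \<in> \<alpha> \<times> \<gamma>" "q \<in> \<alpha> \<times> \<gamma>" "fst p + r * snd p = fst q + r * snd q"
    have "fst p < r" "fst q < r" using pq(1,2) \<alpha>(2) by auto
    then have "fst p = fst q \<and> snd p = snd q" using pair_inj pq(3) by blast
    then show "p = q" by (simp add: prod_eq_iff)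
  qed
  have \<beta>sub: "\<beta> \<subseteq> {..<r*N}"
  proof
    fix x assume "x \<in> \<beta>"
    then obtain i k where ik: "i \<in> \<alpha>" "k \<in> \<gamma>" "x = i + r * k" by (auto simp: \<beta>_def)
    have "i < r" "k < N" using ik \<alpha>(2) \<gamma>(1) by auto
    then show "x \<in> {..<r*N}" using idx ik(3) by simp
  qed
  have \<beta>ne: "\<beta> \<noteq> {}" using \<alpha>(1) \<gamma>(2) by (simp add: \<beta>_def)
  have finb: "finite \<beta>" using \<beta>sub finite_subset by blast
  have key: "(\<Sum>i\<in>\<alpha>. H i (lin {..<N} \<gamma> f t)) = C + ((\<Sum>b\<in>\<beta>. G1 b (t mod n1)) + (\<Sum>b\<in>\<beta>. G2 b (t div n1)))" for t
  proof -
    have "(\<Sum>i\<in>\<alpha>. H i (lin {..<N} \<gamma> f t))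
        = (\<Sum>i\<in>\<alpha>. (\<Sum>k\<in>{..<N} - \<gamma>. g i k (f k)) + (\<Sum>k\<in>\<gamma>. g i k t))"
    proof (rule sum.cong[OF refl])
      fix i assume "i \<in> \<alpha>"
      have "H i (lin {..<N} \<gamma> f t) = (\<Sum>k\<in>{..<N} - \<gamma>. g i k (lin {..<N} \<gamma> f t k)) + (\<Sum>k\<in>\<gamma>. g i k (lin {..<N} \<gamma> f t k))"
        unfolding H_def using sum.subset_diff[OF \<gamma>(1)] by simp
      also have "\<dots> = (\<Sum>k\<in>{..<N} - \<gamma>. g i k (f k)) + (\<Sum>k\<in>\<gamma>. g i k t)"
        using \<gamma>(1) by (auto simp: lin_def intro!: sum.cong arg_cong2[where f="(+)"])
      finally show "H i (lin {..<N} \<gamma> f t) = (\<Sum>k\<in>{..<N} - \<gamma>. g i k (f k)) + (\<Sum>k\<in>\<gamma>. g i k t)" .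
    qed
    also have "\<dots> = C + (\<Sum>p\<in>\<alpha> \<times> \<gamma>. g (fst p) (snd p) t)"
      by (simp add: sum.distrib C_def sum.cartesian_product case_prod_beta)
    also have "(\<Sum>p\<in>\<alpha> \<times> \<gamma>. g (fst p) (snd p) t) = (\<Sum>b\<in>\<beta>. G1 b (t mod n1) + G2 b (t div n1))"
      unfolding \<beta>_def by (subst sum.reindex[OF injb]) (simp add: g_def case_prod_beta)
    also have "\<dots> = (\<Sum>b\<in>\<beta>. G1 b (t mod n1)) + (\<Sum>b\<in>\<beta>. G2 b (t div n1))"
      by (simp add: sum.distrib)
    finally show ?thesis .
  qed
  have CS: "s + C \<in> S"
    unfolding C_def
  proof (rule add_sum_in_S[OF cl sS])
    show "finite (\<alpha> \<times> ({..<N} - \<gamma>))" using finA by simp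
    show "\<forall>a\<in>\<alpha> \<times> ({..<N} - \<gamma>). g (fst a) (snd a) (f (snd a)) \<in> S"
      using \<alpha>(2) fW gS by (auto simp: words_def PiE_def Pi_def)
  qed
  have linW: "lin {..<N} \<gamma> f t \<in> W" if "t < m" for t
    using lin_words[OF fW that] by (simp add: W_def)
  have m0: "0 < m" using m1 by simp
  show False
  proof (cases "c (lin {..<N} \<gamma> f 0) = 0")
    case True
    have inD1: "s + (\<Sum>i\<in>\<alpha>. H i (lin {..<N} \<gamma> f t)) \<in> D1" if "t < m" for t
    proof -
      have "c (lin {..<N} \<gamma> f t) = 0" using monoc that True by metis
      then show ?thesis by (simp add: c_def split: if_splits)
    qed
    define s' where "s' = (s + C) + (\<Sum>b\<in>\<beta>. G2 b 0)"
    have s'S: "s' \<in> S" unfolding s'_def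
      by (rule add_sum_in_S[OF cl CS finb]) (use \<beta>sub G2S n2 in auto)
    obtain j where j: "j < n1" "s' + (\<Sum>b\<in>\<beta>. G1 b j) \<notin> D1"
      using G1f[THEN spec[of _ \<beta>], THEN mp, OF \<beta>ne, THEN mp, OF \<beta>sub, THEN bspec, OF s'S] by blast
    have "n1 * 1 \<le> n1 * n2" using n2 by (rule mult_le_mono2)
    then have jm: "j < m" using j(1) unfolding m_def by linarith
    have "s + (\<Sum>i\<in>\<alpha>. H i (lin {..<N} \<gamma> f j)) = s' + (\<Sum>b\<in>\<beta>. G1 b j)"
      using j(1) by (simp add: key s'_def add.assoc add.commute add.left_commute)
    then show False using inD1[OF jm] j(2) by simp
  next
    case False
    have inD2: "s + (\<Sum>i\<in>\<alpha>. H i (lin {..<N} \<gamma> f t)) \<in> D2" if "t < m" for t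
    proof -
      have "c (lin {..<N} \<gamma> f t) \<noteq> 0" using monoc that False by metis
      then show ?thesis using inD[OF linW[OF that]] by (simp add: c_def split: if_splits)
    qed
    define s' where "s' = (s + C) + (\<Sum>b\<in>\<beta>. G1 b 0)"
    have s'S: "s' \<in> S" unfolding s'_def
      by (rule add_sum_in_S[OF cl CS finb]) (use \<beta>sub G1S n1 in auto)
    obtain j where j: "j < n2" "s' + (\<Sum>b\<in>\<beta>. G2 b j) \<notin> D2"
      using G2f[THEN spec[of _ \<beta>], THEN mp, OF \<beta>ne, THEN mp, OF \<beta>sub, THEN bspec, OF s'S] by blast
    have jm: "n1 * j < m" using j(1) n1 by (simp add: m_def)
    have "s + (\<Sum>i\<in>\<alpha>. H i (lin {..<N} \<gamma> f (n1 * j))) = s' + (\<Sum>b\<in>\<beta>. G2 b j)"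
      using n1 by (simp add: key s'_def add.assoc add.commute add.left_commute)
    then show False using inD2[OF jm] j(2) by simp
  qed
qed


definition fip :: "'a set \<Rightarrow> 'a set set \<Rightarrow> bool" where
  "fip S K \<longleftrightarrow> (\<forall>G. finite G \<and> G \<subseteq> K \<longrightarrow> S \<inter> \<Inter>G \<noteq> {})"

lemma fip_insert:
  assumes "\<And>G. finite G \<Longrightarrow> G \<subseteq> F \<Longrightarrow> S \<inter> \<Inter>G \<inter> X \<noteq> {}"
  shows "fip S (insert X F)"
  unfolding fip_def
proof (intro allI impI)
  fix G assume G: "finite G \<and> G \<subseteq> insert X F"
  then have "finite (G - {X})" "G - {X} \<subseteq> F" by auto
  then have "S \<inter> \<Inter>(G - {X}) \<inter> X \<noteq> {}" by (rule assms)
  moreover have "S \<inter> \<Inter>(G - {X}) \<inter> X \<subseteq> S \<inter> \<Inter>G" by auto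
  ultimately show "S \<inter> \<Inter>G \<noteq> {}" by blast
qed

lemma ultrafilter_exists:
  assumes KS: "K \<subseteq> Pow S" and fipK: "fip S K"
  shows "\<exists>u. ultrafilter_on S u \<and> K \<subseteq> u"
proof -
  define A where "A = {F. K \<subseteq> F \<and> F \<subseteq> Pow S \<and> fip S F}"
  have KA: "K \<in> A" using KS fipK by (simp add: A_def)
  have "\<forall>C\<in>chains A. \<exists>U\<in>A. \<forall>X\<in>C. X \<subseteq> U"
  proof
    fix C assume C: "C \<in> chains A"
    show "\<exists>U\<in>A. \<forall>X\<in>C. X \<subseteq> U"
    proof (cases "C = {}")
      case True then show ?thesis using KA by blast
    next
      case False
      have CA: "C \<subseteq> A" using C by (simp add: chains_def)
      have ch: "subset.chain A C" using C by (simp add: chains_alt_def)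
      have "\<Union>C \<in> A"
        unfolding A_def
      proof (intro CollectI conjI)
        obtain X where "X \<in> C" using False by blast
        then have "K \<subseteq> X" using CA by (auto simp: A_def)
        then show "K \<subseteq> \<Union>C" using \<open>X \<in> C\<close> by blast
        show "\<Union>C \<subseteq> Pow S" using CA by (auto simp: A_def)
        show "fip S (\<Union>C)"
          unfolding fip_def
        proof (intro allI impI)
          fix G assume G: "finite G \<and> G \<subseteq> \<Union>C"
          then obtain B where B: "B \<in> C" "G \<subseteq> B"
            using finite_subset_Union_chain[of G C A] False ch by blast
          then have "fip S B" using CA by (auto simp: A_def)
          then show "S \<inter> \<Inter>G \<noteq> {}" using B G unfolding fip_def by blast
        qed
      qed
      then show ?thesis by blast
    qed
  qed
  then obtain M where MA: "M \<in> A" and Mmax: "\<forall>X\<in>A. M \<subseteq> X \<longrightarrow> X = M"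
    using Zorn_Lemma2[of A] by blast
  have MS: "M \<subseteq> Pow S" and KM: "K \<subseteq> M" and fipM: "fip S M" using MA by (auto simp: A_def)
  have addM: "X \<in> M" if "X \<subseteq> S" "fip S (insert X M)" for X
  proof -
    have "insert X M \<in> A" using that MS KM by (auto simp: A_def)
    then have "insert X M = M" using Mmax by blast
    then show ?thesis by blast
  qed
  have fipM': "S \<inter> \<Inter>G \<noteq> {}" if "finite G" "G \<subseteq> M" for G
    using fipM that unfolding fip_def by blast
  have "ultrafilter_on S M"
    unfolding ultrafilter_on_def
  proof (intro conjI allI impI ballI)
    show "\<And>B. B \<in> M \<Longrightarrow> B \<subseteq> S" using MS by blast
    show "S \<in> M"
    proof (rule addM)
      show "fip S (insert S M)"
      proof (rule fip_insert)
        fix G assume "finite G" "G \<subseteq> M"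
        then have "S \<inter> \<Inter>G \<noteq> {}" by (rule fipM')
        then show "S \<inter> \<Inter>G \<inter> S \<noteq> {}" by auto
      qed
    qed simp
    show "{} \<notin> M"
    proof
      assume "{} \<in> M"
      then have "S \<inter> \<Inter>{{}} \<noteq> {}" by (intro fipM') auto
      then show False by simp
    qed
  next
    fix B C assume BC: "B \<in> M \<and> B \<subseteq> C \<and> C \<subseteq> S"
    show "C \<in> M"
    proof (rule addM)
      show "C \<subseteq> S" using BC by simp
      show "fip S (insert C M)"
      proof (rule fip_insert)
        fix G assume "finite G" "G \<subseteq> M"
        then have "finite (insert B G)" "insert B G \<subseteq> M" using BC by auto
        then have "S \<inter> \<Inter>(insert B G) \<noteq> {}" by (rule fipM')
        moreover have "S \<inter> \<Inter>(insert B G) \<subseteq> S \<inter> \<Inter>G \<inter> C" using BC by auto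
        ultimately show "S \<inter> \<Inter>G \<inter> C \<noteq> {}" by blast
      qed
    qed
  next
    fix B C assume BC: "B \<in> M \<and> C \<in> M"
    show "B \<inter> C \<in> M"
    proof (rule addM)
      show "B \<inter> C \<subseteq> S" using BC MS by blast
      show "fip S (insert (B \<inter> C) M)"
      proof (rule fip_insert)
        fix G assume "finite G" "G \<subseteq> M"
        then have "finite (insert B (insert C G))" "insert B (insert C G) \<subseteq> M" using BC by auto
        then have "S \<inter> \<Inter>(insert B (insert C G)) \<noteq> {}" by (rule fipM')
        moreover have "S \<inter> \<Inter>(insert B (insert C G)) = S \<inter> \<Inter>G \<inter> (B \<inter> C)" by auto
        ultimately show "S \<inter> \<Inter>G \<inter> (B \<inter> C) \<noteq> {}" by simp
      qed
    qed
  next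
    fix B assume B: "B \<subseteq> S"
    show "B \<in> M \<or> S - B \<in> M"
    proof (rule ccontr)
      assume nB: "\<not> (B \<in> M \<or> S - B \<in> M)"
      have "\<not> fip S (insert B M)" using addM B nB by blast
      then obtain G1 where G1: "finite G1" "G1 \<subseteq> M" "S \<inter> \<Inter>G1 \<inter> B = {}"
        using fip_insert[of M S B] by blast
      have "\<not> fip S (insert (S - B) M)" using addM B nB by blast
      then obtain G2 where G2: "finite G2" "G2 \<subseteq> M" "S \<inter> \<Inter>G2 \<inter> (S - B) = {}"
        using fip_insert[of M S "S - B"] by blast
      have "finite (G1 \<union> G2)" "G1 \<union> G2 \<subseteq> M" using G1 G2 by auto
      then have "S \<inter> \<Inter>(G1 \<union> G2) \<noteq> {}" by (rule fipM')
      moreover have "S \<inter> \<Inter>(G1 \<union> G2) = {}" using G1(3) G2(3) by auto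
      ultimately show False by simp
    qed
  qed
  then show ?thesis using KM by blast
qed


section \<open>Basic ultrafilter facts\<close>

lemma uf_sub: "ultrafilter_on S p \<Longrightarrow> B \<in> p \<Longrightarrow> B \<subseteq> S"
  unfolding ultrafilter_on_def by (elim conjE) (rule bspec)

lemma uf_S: "ultrafilter_on S p \<Longrightarrow> S \<in> p"
  unfolding ultrafilter_on_def by (elim conjE)

lemma uf_empty: "ultrafilter_on S p \<Longrightarrow> {} \<notin> p"
  unfolding ultrafilter_on_def by (elim conjE)

lemma uf_up:
  assumes "ultrafilter_on S p" "B \<in> p" "B \<subseteq> C" "C \<subseteq> S"
  shows "C \<in> p"
proof -
  have "\<forall>B C. B \<in> p \<and> B \<subseteq> C \<and> C \<subseteq> S \<longrightarrow> C \<in> p"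
    using assms(1) unfolding ultrafilter_on_def by (elim conjE) assumption
  then show ?thesis using assms(2-4) by blast
qed

lemma uf_int:
  assumes "ultrafilter_on S p" "B \<in> p" "C \<in> p"
  shows "B \<inter> C \<in> p"
proof -
  have "\<forall>B C. B \<in> p \<and> C \<in> p \<longrightarrow> B \<inter> C \<in> p"
    using assms(1) unfolding ultrafilter_on_def by (elim conjE) assumption
  then show ?thesis using assms(2-3) by blast
qed

lemma uf_max:
  assumes "ultrafilter_on S p" "B \<subseteq> S"
  shows "B \<in> p \<or> S - B \<in> p"
proof -
  have "\<forall>B. B \<subseteq> S \<longrightarrow> B \<in> p \<or> S - B \<in> p"
    using assms(1) unfolding ultrafilter_on_def by (elim conjE) assumption
  then show ?thesis using assms(2) by blast
qed

lemma uf_nonempty: "ultrafilter_on S p \<Longrightarrow> B \<in> p \<Longrightarrow> B \<noteq> {}"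
  using uf_empty by blast

lemma uf_int_iff:
  assumes "ultrafilter_on S p" "B \<subseteq> S" "C \<subseteq> S"
  shows "B \<inter> C \<in> p \<longleftrightarrow> B \<in> p \<and> C \<in> p"
  using assms uf_int[OF assms(1)] uf_up[OF assms(1), of "B \<inter> C"] by blast

lemma uf_compl_iff:
  assumes "ultrafilter_on S p" "B \<subseteq> S"
  shows "S - B \<in> p \<longleftrightarrow> B \<notin> p"
proof
  assume "S - B \<in> p"
  show "B \<notin> p"
  proof
    assume "B \<in> p"
    then have "(S - B) \<inter> B \<in> p" using uf_int[OF assms(1) \<open>S - B \<in> p\<close>] by blast
    moreover have "(S - B) \<inter> B = {}" by auto
    ultimately show False using uf_empty[OF assms(1)] by simp
  qed
next
  assume "B \<notin> p" then show "S - B \<in> p" using uf_max[OF assms] by blast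
qed

lemma uf_sub_eq:
  assumes "ultrafilter_on S p" "ultrafilter_on S q" "p \<subseteq> q"
  shows "p = q"
proof
  show "q \<subseteq> p"
  proof
    fix D assume D: "D \<in> q"
    have DS: "D \<subseteq> S" using uf_sub[OF assms(2) D] .
    show "D \<in> p"
    proof (rule ccontr)
      assume "D \<notin> p"
      then have "S - D \<in> p" using uf_compl_iff[OF assms(1) DS] by simp
      then have "S - D \<in> q" using assms(3) by blast
      then show False using uf_compl_iff[OF assms(2) DS] D by simp
    qed
  qed
qed (rule assms(3))

lemma uf_finite_inter:
  assumes "ultrafilter_on S u" "finite G" "G \<subseteq> u"
  shows "S \<inter> \<Inter>G \<in> u"
  using assms(2,3)
proof (induction G rule: finite_induct)
  case empty then show ?case using uf_S[OF assms(1)] by simp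
next
  case (insert g G)
  then have a: "S \<inter> \<Inter>G \<in> u" and b: "g \<in> u" by auto
  have "(S \<inter> \<Inter>G) \<inter> g \<in> u" by (rule uf_int[OF assms(1) a b])
  moreover have "(S \<inter> \<Inter>G) \<inter> g = S \<inter> \<Inter>(insert g G)" by auto
  ultimately show ?case by simp
qed

definition Tq :: "'a::plus set \<Rightarrow> 'a set set \<Rightarrow> 'a set \<Rightarrow> 'a set" where
  "Tq S q D = {x\<in>S. {y\<in>S. x + y \<in> D} \<in> q}"

lemma uf_plus_iff: "D \<in> uf_plus S p q \<longleftrightarrow> D \<subseteq> S \<and> Tq S q D \<in> p"
  by (simp add: uf_plus_def Tq_def)

lemma Tq_sub: "Tq S q D \<subseteq> S"
  by (auto simp: Tq_def)

lemma Tq_mono: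
  assumes "ultrafilter_on S q" "B \<subseteq> C" "C \<subseteq> S"
  shows "Tq S q B \<subseteq> Tq S q C"
proof
  fix x assume "x \<in> Tq S q B"
  then have x: "x \<in> S" "{y\<in>S. x + y \<in> B} \<in> q" by (auto simp: Tq_def)
  have "{y\<in>S. x + y \<in> B} \<subseteq> {y\<in>S. x + y \<in> C}" using assms(2) by auto
  then have "{y\<in>S. x + y \<in> C} \<in> q" using uf_up[OF assms(1) x(2)] by auto
  then show "x \<in> Tq S q C" using x(1) by (simp add: Tq_def)
qed

lemma Tq_inter:
  assumes "ultrafilter_on S q"
  shows "Tq S q (B \<inter> C) = Tq S q B \<inter> Tq S q C"
proof -
  have "{y\<in>S. x + y \<in> B \<inter> C} \<in> q \<longleftrightarrow> {y\<in>S. x + y \<in> B} \<in> q \<and> {y\<in>S. x + y \<in> C} \<in> q" for x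
  proof -
    have "{y\<in>S. x + y \<in> B \<inter> C} = {y\<in>S. x + y \<in> B} \<inter> {y\<in>S. x + y \<in> C}" by auto
    then show ?thesis using uf_int_iff[OF assms, of "{y\<in>S. x + y \<in> B}" "{y\<in>S. x + y \<in> C}"] by auto
  qed
  then show ?thesis by (auto simp: Tq_def)
qed

lemma Tq_S:
  assumes cl: "\<forall>x\<in>S. \<forall>y\<in>S. x + y \<in> S" and "ultrafilter_on S q"
  shows "Tq S q S = S"
proof -
  have "{y\<in>S. x + y \<in> S} = S" if "x \<in> S" for x using cl that by auto
  then show ?thesis using uf_S[OF assms(2)] by (auto simp: Tq_def)
qed

lemma Tq_empty: "ultrafilter_on S q \<Longrightarrow> Tq S q {} = {}"
  using uf_empty by (auto simp: Tq_def)

lemma Tq_compl: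
  assumes cl: "\<forall>x\<in>S. \<forall>y\<in>S. x + y \<in> S" and q: "ultrafilter_on S q" and "B \<subseteq> S"
  shows "Tq S q (S - B) = S - Tq S q B"
proof -
  have "{y\<in>S. x + y \<in> S - B} \<in> q \<longleftrightarrow> {y\<in>S. x + y \<in> B} \<notin> q" if "x \<in> S" for x
  proof -
    have "{y\<in>S. x + y \<in> S - B} = S - {y\<in>S. x + y \<in> B}" using cl that by auto
    then show ?thesis using uf_compl_iff[OF q, of "{y\<in>S. x + y \<in> B}"] by auto
  qed
  then show ?thesis by (auto simp: Tq_def)
qed

lemma uf_plus_uf:
  assumes cl: "\<forall>x\<in>S. \<forall>y\<in>S. x + y \<in> S" and p: "ultrafilter_on S p" and q: "ultrafilter_on S q"
  shows "ultrafilter_on S (uf_plus S p q)"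
  unfolding ultrafilter_on_def
proof (intro conjI allI impI ballI)
  show "B \<subseteq> S" if "B \<in> uf_plus S p q" for B using that by (simp add: uf_plus_iff)
  show "S \<in> uf_plus S p q" using Tq_S[OF cl q] uf_S[OF p] by (simp add: uf_plus_iff)
  show "{} \<notin> uf_plus S p q" using Tq_empty[OF q] uf_empty[OF p] by (simp add: uf_plus_iff)
next
  fix B C assume BC: "B \<in> uf_plus S p q \<and> B \<subseteq> C \<and> C \<subseteq> S"
  then have "Tq S q B \<in> p" by (simp add: uf_plus_iff)
  then have "Tq S q C \<in> p" using uf_up[OF p _ Tq_mono[OF q] Tq_sub] BC by blast
  then show "C \<in> uf_plus S p q" using BC by (simp add: uf_plus_iff)
next
  fix B C assume BC: "B \<in> uf_plus S p q \<and> C \<in> uf_plus S p q"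
  then have "Tq S q B \<in> p" "Tq S q C \<in> p" "B \<subseteq> S" "C \<subseteq> S" by (simp_all add: uf_plus_iff)
  then show "B \<inter> C \<in> uf_plus S p q"
    using uf_int[OF p] Tq_inter[OF q] by (auto simp: uf_plus_iff)
next
  fix B assume B: "B \<subseteq> S"
  have "Tq S q B \<in> p \<or> S - Tq S q B \<in> p" using uf_max[OF p Tq_sub] .
  then show "B \<in> uf_plus S p q \<or> S - B \<in> uf_plus S p q"
    using Tq_compl[OF cl q B] B by (auto simp: uf_plus_iff)
qed

lemma Tq_assoc:
  assumes cl: "\<forall>x\<in>S. \<forall>y\<in>S. x + y \<in> S" and "D \<subseteq> S"
  shows "Tq S q (Tq S w (D::'a::semigroup_add set)) = Tq S (uf_plus S q w) D"
proof -
  have e: "{b\<in>S. x + b \<in> Tq S w D} = Tq S w {y\<in>S. x + y \<in> D}" if x: "x \<in> S" for x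
  proof -
    have "{c\<in>S. x + b + c \<in> D} = {c\<in>S. b + c \<in> {y\<in>S. x + y \<in> D}}" if "b \<in> S" for b
      using cl x that by (auto simp: add.assoc)
    then show ?thesis using cl x by (auto simp: Tq_def)
  qed
  show ?thesis
    unfolding Tq_def[of S q] Tq_def[of S "uf_plus S q w"]
    using e by (auto simp: uf_plus_iff)
qed

lemma uf_plus_assoc:
  assumes cl: "\<forall>x\<in>S. \<forall>y\<in>S. x + y \<in> S"
  shows "uf_plus S (uf_plus S p q) w = uf_plus S p (uf_plus S q (w::'a::semigroup_add set set))"
proof (rule set_eqI)
  fix D
  show "D \<in> uf_plus S (uf_plus S p q) w \<longleftrightarrow> D \<in> uf_plus S p (uf_plus S q w)"
  proof (cases "D \<subseteq> S")
    case True
    then show ?thesis using Tq_assoc[OF cl True, of q w] Tq_sub[of S w D] by (simp add: uf_plus_iff)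
  next
    case False then show ?thesis by (simp add: uf_plus_iff)
  qed
qed


definition ker :: "'a set \<Rightarrow> 'a set set set \<Rightarrow> 'a set set" where
  "ker S X = {D. D \<subseteq> S \<and> (\<forall>u\<in>X. D \<in> u)}"

definition closedU :: "'a set \<Rightarrow> 'a set set set \<Rightarrow> bool" where
  "closedU S X \<longleftrightarrow> (\<forall>u\<in>X. ultrafilter_on S u) \<and> (\<forall>u. ultrafilter_on S u \<longrightarrow> ker S X \<subseteq> u \<longrightarrow> u \<in> X)"

lemma closedU_ufD: "closedU S X \<Longrightarrow> u \<in> X \<Longrightarrow> ultrafilter_on S u"
  unfolding closedU_def by blast

lemma closedU_memI: "closedU S X \<Longrightarrow> ultrafilter_on S u \<Longrightarrow> ker S X \<subseteq> u \<Longrightarrow> u \<in> X"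
  unfolding closedU_def by blast

lemma closed_Kset:
  assumes "K \<subseteq> Pow S"
  shows "closedU S {u. ultrafilter_on S u \<and> K \<subseteq> u}"
  unfolding closedU_def
proof (intro conjI allI impI ballI)
  fix u assume u: "ultrafilter_on S u" "ker S {u. ultrafilter_on S u \<and> K \<subseteq> u} \<subseteq> u"
  have "K \<subseteq> ker S {u. ultrafilter_on S u \<and> K \<subseteq> u}" using assms by (auto simp: ker_def)
  then show "u \<in> {u. ultrafilter_on S u \<and> K \<subseteq> u}" using u by auto
qed auto

lemma closed_Inter:
  assumes "\<X> \<noteq> {}" "\<And>X. X \<in> \<X> \<Longrightarrow> closedU S X"
  shows "closedU S (\<Inter>\<X>)"
  unfolding closedU_def
proof (intro conjI allI impI ballI)
  fix u assume "u \<in> \<Inter>\<X>"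
  then show "ultrafilter_on S u" using assms closedU_ufD by blast
next
  fix u assume u: "ultrafilter_on S u" "ker S (\<Inter>\<X>) \<subseteq> u"
  show "u \<in> \<Inter>\<X>"
  proof
    fix X assume X: "X \<in> \<X>"
    have "ker S X \<subseteq> ker S (\<Inter>\<X>)" using X by (auto simp: ker_def)
    then show "u \<in> X" using closedU_memI[OF assms(2)[OF X] u(1)] u(2) by blast
  qed
qed

lemma closed_Int2:
  assumes "closedU S X" "closedU S Y"
  shows "closedU S (X \<inter> Y)"
  using closed_Inter[of "{X, Y}" S] assms by auto

lemma chain_nonempty:
  assumes ne: "\<C> \<noteq> {}" and ch: "\<And>X Y. X \<in> \<C> \<Longrightarrow> Y \<in> \<C> \<Longrightarrow> X \<subseteq> Y \<or> Y \<subseteq> X"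
    and cl: "\<And>X. X \<in> \<C> \<Longrightarrow> closedU S X" and nee: "\<And>X. X \<in> \<C> \<Longrightarrow> X \<noteq> {}"
  shows "\<Inter>\<C> \<noteq> {}"
proof -
  define K where "K = \<Union>(ker S ` \<C>)"
  have KS: "K \<subseteq> Pow S" by (auto simp: K_def ker_def)
  have chK: "subset.chain UNIV (ker S ` \<C>)"
    unfolding subset_chain_def
  proof (intro conjI ballI)
    fix A B assume "A \<in> ker S ` \<C>" "B \<in> ker S ` \<C>"
    then obtain X Y where XY: "X \<in> \<C>" "Y \<in> \<C>" "A = ker S X" "B = ker S Y" by auto
    show "A \<subseteq> B \<or> B \<subseteq> A"
      using ch[OF XY(1,2)] XY(3,4) by (auto simp: ker_def)
  qed simp
  have "fip S K"
    unfolding fip_def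
  proof (intro allI impI)
    fix G assume G: "finite G \<and> G \<subseteq> K"
    obtain B where B: "B \<in> ker S ` \<C>" "G \<subseteq> B"
      using finite_subset_Union_chain[of G "ker S ` \<C>" UNIV] G ne chK by (auto simp: K_def)
    then obtain X where X: "X \<in> \<C>" "B = ker S X" by auto
    obtain u where uX: "u \<in> X" using nee[OF X(1)] by blast
    have uu: "ultrafilter_on S u" using closedU_ufD[OF cl[OF X(1)] uX] .
    have "G \<subseteq> u" using B(2) X(2) uX by (auto simp: ker_def)
    then have "S \<inter> \<Inter>G \<in> u" using uf_finite_inter[OF uu] G by blast
    then show "S \<inter> \<Inter>G \<noteq> {}" using uf_empty[OF uu] by auto
  qed
  then obtain u where u: "ultrafilter_on S u" "K \<subseteq> u" using ultrafilter_exists[OF KS] by blast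
  have "u \<in> \<Inter>\<C>"
  proof
    fix X assume X: "X \<in> \<C>"
    have "ker S X \<subseteq> u" using u(2) X by (auto simp: K_def)
    then show "u \<in> X" using closedU_memI[OF cl[OF X] u(1)] by blast
  qed
  then show ?thesis by blast
qed

lemma closed_image:
  assumes cl: "\<forall>x\<in>S. \<forall>y\<in>S. x + y \<in> S" and e: "ultrafilter_on S e" and X: "closedU S X"
  shows "closedU S ((\<lambda>x. uf_plus S x e) ` X)"
  unfolding closedU_def
proof (intro conjI allI impI ballI)
  fix w assume "w \<in> (\<lambda>x. uf_plus S x e) ` X"
  then show "ultrafilter_on S w" using uf_plus_uf[OF cl _ e] closedU_ufD[OF X] by blast
next
  fix w assume w: "ultrafilter_on S w" "ker S ((\<lambda>x. uf_plus S x e) ` X) \<subseteq> w"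
  define K where "K = ker S X \<union> Tq S e ` w"
  have KS: "K \<subseteq> Pow S" using Tq_sub by (auto simp: K_def ker_def)
  have kerI: "S \<inter> \<Inter>G \<in> ker S X" if "finite G" "G \<subseteq> ker S X" for G
    unfolding ker_def
  proof (intro CollectI conjI ballI)
    show "S \<inter> \<Inter>G \<subseteq> S" by blast
    fix u assume "u \<in> X"
    then have uu: "ultrafilter_on S u" using closedU_ufD[OF X] by blast
    have "G \<subseteq> u" using that(2) \<open>u \<in> X\<close> by (auto simp: ker_def)
    then show "S \<inter> \<Inter>G \<in> u" using uf_finite_inter[OF uu that(1)] by blast
  qed
  have "fip S K"
    unfolding fip_def
  proof (intro allI impI)
    fix G assume G: "finite G \<and> G \<subseteq> K"
    define G1 where "G1 = G \<inter> ker S X"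
    have "G - G1 \<subseteq> Tq S e ` w" using G by (auto simp: G1_def K_def)
    then obtain W0 where W0: "W0 \<subseteq> w" "finite W0" "G - G1 = Tq S e ` W0"
      using G finite_subset_image[of "G - G1" "Tq S e" w] by auto
    define D0 where "D0 = S \<inter> \<Inter>W0"
    have D0w: "D0 \<in> w" using uf_finite_inter[OF w(1) W0(2,1)] by (simp add: D0_def)
    have D0S: "D0 \<subseteq> S" by (simp add: D0_def)
    have TD0: "Tq S e D0 \<subseteq> Tq S e D" if "D \<in> W0" for D
      using Tq_mono[OF e, of D0 D] that W0(1) uf_sub[OF w(1)] by (auto simp: D0_def)
    define E where "E = S \<inter> \<Inter>G1"
    have Eker: "E \<in> ker S X" unfolding E_def by (rule kerI) (use G in \<open>auto simp: G1_def\<close>)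
    have sub: "E \<inter> Tq S e D0 \<subseteq> S \<inter> \<Inter>G"
    proof
      fix x assume x: "x \<in> E \<inter> Tq S e D0"
      show "x \<in> S \<inter> \<Inter>G"
      proof (intro IntI InterI)
        show "x \<in> S" using x by (auto simp: E_def)
        fix g assume g: "g \<in> G"
        show "x \<in> g"
        proof (cases "g \<in> G1")
          case True then show ?thesis using x by (auto simp: E_def)
        next
          case False
          then have "g \<in> Tq S e ` W0" using g W0(3) by blast
          then obtain D where "D \<in> W0" "g = Tq S e D" by blast
          then show ?thesis using x TD0 by blast
        qed
      qed
    qed
    have "E \<inter> Tq S e D0 \<noteq> {}"
    proof
      assume empty: "E \<inter> Tq S e D0 = {}"
      have "S - D0 \<in> ker S ((\<lambda>x. uf_plus S x e) ` X)"
        unfolding ker_def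
      proof (intro CollectI conjI ballI)
        show "S - D0 \<subseteq> S" by blast
        fix v assume "v \<in> (\<lambda>x. uf_plus S x e) ` X"
        then obtain x where x: "x \<in> X" "v = uf_plus S x e" by blast
        have xu: "ultrafilter_on S x" using closedU_ufD[OF X x(1)] .
        have "E \<in> x" using Eker x(1) by (auto simp: ker_def)
        then have "Tq S e D0 \<notin> x"
          using uf_int[OF xu, of E "Tq S e D0"] empty uf_empty[OF xu] by auto
        then have "S - Tq S e D0 \<in> x" using uf_compl_iff[OF xu Tq_sub] by simp
        then have "Tq S e (S - D0) \<in> x" using Tq_compl[OF cl e D0S] by simp
        then show "S - D0 \<in> v" using x(2) by (simp add: uf_plus_iff)
      qed
      then have "S - D0 \<in> w" using w(2) by blast
      then show False using uf_compl_iff[OF w(1) D0S] D0w by simp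
    qed
    then show "S \<inter> \<Inter>G \<noteq> {}" using sub by blast
  qed
  then obtain x where x: "ultrafilter_on S x" "K \<subseteq> x" using ultrafilter_exists[OF KS] by blast
  have xX: "x \<in> X" using closedU_memI[OF X x(1)] x(2) by (auto simp: K_def)
  have "w \<subseteq> uf_plus S x e"
  proof
    fix D assume "D \<in> w"
    then have "Tq S e D \<in> x" "D \<subseteq> S" using x(2) uf_sub[OF w(1)] by (auto simp: K_def)
    then show "D \<in> uf_plus S x e" by (simp add: uf_plus_iff)
  qed
  then have "w = uf_plus S x e" using uf_sub_eq[OF w(1) uf_plus_uf[OF cl x(1) e]] by blast
  then show "w \<in> (\<lambda>x. uf_plus S x e) ` X" using xX by blast
qed

lemma closed_fix:
  assumes cl: "\<forall>x\<in>S. \<forall>y\<in>S. x + y \<in> S" and e: "ultrafilter_on S e"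
  shows "closedU S {x. ultrafilter_on S x \<and> uf_plus S x e = e}"
proof -
  have eq: "{x. ultrafilter_on S x \<and> uf_plus S x e = e} = {x. ultrafilter_on S x \<and> Tq S e ` e \<subseteq> x}"
  proof (intro set_eqI iffI)
    fix x assume "x \<in> {x. ultrafilter_on S x \<and> uf_plus S x e = e}"
    then have x: "ultrafilter_on S x" "uf_plus S x e = e" by auto
    have "Tq S e ` e \<subseteq> x"
    proof
      fix T assume "T \<in> Tq S e ` e"
      then obtain D where "D \<in> e" "T = Tq S e D" by blast
      then show "T \<in> x" using x(2) by (metis uf_plus_iff)
    qed
    then show "x \<in> {x. ultrafilter_on S x \<and> Tq S e ` e \<subseteq> x}" using x by blast
  next
    fix x assume "x \<in> {x. ultrafilter_on S x \<and> Tq S e ` e \<subseteq> x}"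
    then have x: "ultrafilter_on S x" "Tq S e ` e \<subseteq> x" by auto
    have "e \<subseteq> uf_plus S x e"
    proof
      fix D assume "D \<in> e"
      then show "D \<in> uf_plus S x e" using x(2) uf_sub[OF e] by (auto simp: uf_plus_iff)
    qed
    then have "e = uf_plus S x e" using uf_sub_eq[OF e uf_plus_uf[OF cl x(1) e]] by blast
    then show "x \<in> {x. ultrafilter_on S x \<and> uf_plus S x e = e}" using x by simp
  qed
  show ?thesis unfolding eq by (rule closed_Kset) (use Tq_sub in blast)
qed


lemma closedU_sub: "closedU S X \<Longrightarrow> X \<subseteq> {u. ultrafilter_on S u}"
  using closedU_ufD by blast

lemma ellis:
  fixes S :: "'a::semigroup_add set"
  assumes cl: "\<forall>x\<in>S. \<forall>y\<in>S. x + y \<in> S" and H: "closedU S H" "H \<noteq> {}"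
    and semi: "\<forall>x\<in>H. \<forall>y\<in>H. uf_plus S x y \<in> H"
  shows "\<exists>e\<in>H. uf_plus S e e = e"
proof -
  define U where "U = {u. ultrafilter_on S u}"
  define \<Sigma> where "\<Sigma> = {X. X \<subseteq> H \<and> closedU S X \<and> X \<noteq> {} \<and> (\<forall>x\<in>X. \<forall>y\<in>X. uf_plus S x y \<in> X)}"
  define A where "A = (\<lambda>X. U - X) ` \<Sigma>"
  have HS: "H \<in> \<Sigma>" using H semi by (simp add: \<Sigma>_def)
  have XU: "X \<subseteq> U" if "X \<in> \<Sigma>" for X using that closedU_sub by (auto simp: \<Sigma>_def U_def)
  have "\<forall>C\<in>chains A. \<exists>V\<in>A. \<forall>Y\<in>C. Y \<subseteq> V"
  proof
    fix C assume C: "C \<in> chains A"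
    show "\<exists>V\<in>A. \<forall>Y\<in>C. Y \<subseteq> V"
    proof (cases "C = {}")
      case True then show ?thesis using HS by (auto simp: A_def)
    next
      case False
      have CA: "C \<subseteq> A" using C by (simp add: chains_def)
      have chC: "\<And>Y Z. Y \<in> C \<Longrightarrow> Z \<in> C \<Longrightarrow> Y \<subseteq> Z \<or> Z \<subseteq> Y" using C chainsD by blast
      define \<C> where "\<C> = (\<lambda>Y. U - Y) ` C"
      have CY: "U - Y \<in> \<Sigma> \<and> Y = U - (U - Y)" if Y: "Y \<in> C" for Y
      proof -
        obtain X where X: "X \<in> \<Sigma>" "Y = U - X" using CA Y by (auto simp: A_def)
        then have "U - Y = X" using XU[OF X(1)] by auto
        then show ?thesis using X by auto
      qed
      have CS: "\<C> \<subseteq> \<Sigma>" using CY by (auto simp: \<C>_def)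
      have neC: "\<C> \<noteq> {}" using False by (simp add: \<C>_def)
      have chain: "X \<subseteq> Y \<or> Y \<subseteq> X" if XY: "X \<in> \<C>" "Y \<in> \<C>" for X Y
      proof -
        obtain X' Y' where "X' \<in> C" "Y' \<in> C" "X = U - X'" "Y = U - Y'" using XY by (auto simp: \<C>_def)
        then show ?thesis using chC[of X' Y'] by auto
      qed
      have clC: "closedU S X" if "X \<in> \<C>" for X using CS that by (auto simp: \<Sigma>_def)
      have neX: "X \<noteq> {}" if "X \<in> \<C>" for X using CS that by (auto simp: \<Sigma>_def)
      have "\<Inter>\<C> \<in> \<Sigma>"
        unfolding \<Sigma>_def
      proof (intro CollectI conjI ballI)
        obtain X1 where "X1 \<in> \<C>" using neC by blast
        then have "X1 \<subseteq> H" using CS by (auto simp: \<Sigma>_def)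
        then show "\<Inter>\<C> \<subseteq> H" using \<open>X1 \<in> \<C>\<close> by blast
        show "closedU S (\<Inter>\<C>)" by (rule closed_Inter[OF neC clC])
        show "\<Inter>\<C> \<noteq> {}" by (rule chain_nonempty[OF neC chain clC neX])
        fix x y assume "x \<in> \<Inter>\<C>" "y \<in> \<Inter>\<C>"
        then show "uf_plus S x y \<in> \<Inter>\<C>" using CS by (auto simp: \<Sigma>_def)
      qed
      moreover have "\<forall>Y\<in>C. Y \<subseteq> U - \<Inter>\<C>"
      proof
        fix Y assume Y: "Y \<in> C"
        then have "\<Inter>\<C> \<subseteq> U - Y" by (auto simp: \<C>_def)
        moreover have "Y \<subseteq> U" using CY[OF Y] by blast
        ultimately show "Y \<subseteq> U - \<Inter>\<C>" by blast
      qed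
      ultimately show ?thesis by (auto simp: A_def)
    qed
  qed
  then obtain M where MA: "M \<in> A" and Mmax: "\<forall>X\<in>A. M \<subseteq> X \<longrightarrow> X = M"
    using Zorn_Lemma2[of A] by blast
  obtain X0 where X0: "X0 \<in> \<Sigma>" "M = U - X0" using MA by (auto simp: A_def)
  have min: "X = X0" if "X \<in> \<Sigma>" "X \<subseteq> X0" for X
  proof -
    have "U - X \<in> A" using that(1) by (simp add: A_def)
    moreover have "M \<subseteq> U - X" using X0(2) that(2) by blast
    ultimately have "U - X = U - X0" using Mmax X0(2) by blast
    then show ?thesis using XU[OF that(1)] XU[OF X0(1)] by blast
  qed
  have X0H: "X0 \<subseteq> H" and X0c: "closedU S X0" and X0ne: "X0 \<noteq> {}"
    and X0s: "\<forall>x\<in>X0. \<forall>y\<in>X0. uf_plus S x y \<in> X0" using X0(1) by (auto simp: \<Sigma>_def)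
  obtain e where eX: "e \<in> X0" using X0ne by blast
  have eu: "ultrafilter_on S e" using closedU_ufD[OF X0c eX] .
  define Y where "Y = (\<lambda>x. uf_plus S x e) ` X0"
  have "Y \<in> \<Sigma>"
    unfolding \<Sigma>_def
  proof (intro CollectI conjI ballI)
    show "Y \<subseteq> H" using X0s eX X0H by (auto simp: Y_def)
    show "closedU S Y" unfolding Y_def by (rule closed_image[OF cl eu X0c])
    show "Y \<noteq> {}" using X0ne by (simp add: Y_def)
    fix a b assume "a \<in> Y" "b \<in> Y"
    then obtain x y where xy: "x \<in> X0" "y \<in> X0" "a = uf_plus S x e" "b = uf_plus S y e" by (auto simp: Y_def)
    have "uf_plus S a b = uf_plus S (uf_plus S (uf_plus S x e) y) e"
      using xy(3,4) uf_plus_assoc[OF cl] by simp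
    moreover have "uf_plus S (uf_plus S x e) y \<in> X0" using X0s xy(1,2) eX by blast
    ultimately show "uf_plus S a b \<in> Y" by (auto simp: Y_def)
  qed
  moreover have "Y \<subseteq> X0" using X0s eX by (auto simp: Y_def)
  ultimately have YX: "Y = X0" by (rule min)
  have "e \<in> (\<lambda>x. uf_plus S x e) ` X0" using YX eX by (simp add: Y_def)
  then obtain x where x: "x \<in> X0" "uf_plus S x e = e" by (metis imageE)
  define Z where "Z = X0 \<inter> {x. ultrafilter_on S x \<and> uf_plus S x e = e}"
  have "Z \<in> \<Sigma>"
    unfolding \<Sigma>_def
  proof (intro CollectI conjI ballI)
    show "Z \<subseteq> H" using X0H by (auto simp: Z_def)
    show "closedU S Z" unfolding Z_def by (rule closed_Int2[OF X0c closed_fix[OF cl eu]])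
    show "Z \<noteq> {}" using x closedU_ufD[OF X0c x(1)] by (auto simp: Z_def)
    fix a b assume ab: "a \<in> Z" "b \<in> Z"
    then have "uf_plus S (uf_plus S a b) e = uf_plus S a (uf_plus S b e)" using uf_plus_assoc[OF cl] by simp
    also have "\<dots> = e" using ab by (simp add: Z_def)
    finally show "uf_plus S a b \<in> Z"
      using ab X0s uf_plus_uf[OF cl] by (auto simp: Z_def)
  qed
  moreover have "Z \<subseteq> X0" by (auto simp: Z_def)
  ultimately have "Z = X0" by (rule min)
  then have "uf_plus S e e = e" using eX by (auto simp: Z_def)
  then show ?thesis using eX X0H by blast
qed


definition S2 :: "(nat \<times> nat) set" where "S2 = posnat \<times> posnat"

definition Pset :: "nat \<Rightarrow> nat set \<Rightarrow> (nat \<times> nat) set" where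
  "Pset l B = {(a, b). a \<in> posnat \<and> b \<in> posnat \<and> (\<forall>k\<le>l. a + k * b \<in> B)}"

lemma cl1: "\<forall>x\<in>posnat. \<forall>y\<in>posnat. x + y \<in> posnat"
  by (simp add: posnat_def)

lemma cl2: "\<forall>x\<in>S2. \<forall>y\<in>S2. x + y \<in> S2"
  by (auto simp: S2_def posnat_def)

lemma S2_ne: "(1, 1) \<in> S2" by (simp add: S2_def posnat_def)

lemma Pset_sub: "Pset l B \<subseteq> S2" by (auto simp: Pset_def S2_def)

lemma Pset_inter: "Pset l (B \<inter> C) = Pset l B \<inter> Pset l C" by (auto simp: Pset_def)

lemma Pset_posnat: "Pset l posnat = S2" by (auto simp: Pset_def S2_def posnat_def)

lemma CR_super:
  assumes "CR_set S D" "D \<subseteq> D'" "D' \<subseteq> S"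
  shows "CR_set S D'"
  unfolding CR_set_def
proof (intro conjI allI impI)
  show "D' \<subseteq> S" by (rule assms(3))
  fix n :: nat assume n: "n \<ge> 1"
  obtain r :: nat where r: "r \<ge> 1" and rp: "\<forall>M :: nat \<Rightarrow> nat \<Rightarrow> 'a. (\<forall>i<r. \<forall>j<n. M i j \<in> S) \<longrightarrow>
           (\<exists>\<alpha>. \<alpha> \<noteq> {} \<and> \<alpha> \<subseteq> {..<r} \<and> (\<exists>s\<in>S. \<forall>j<n. s + (\<Sum>i\<in>\<alpha>. M i j) \<in> D))"
    using assms(1) n unfolding CR_set_def by blast
  show "\<exists>r\<ge>(1::nat). \<forall>M. (\<forall>i<r. \<forall>j<n. M i j \<in> S) \<longrightarrow>
           (\<exists>\<alpha>. \<alpha> \<noteq> {} \<and> \<alpha> \<subseteq> {..<r} \<and> (\<exists>s\<in>S. \<forall>j<n. s + (\<Sum>i\<in>\<alpha>. M i j) \<in> D'))"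
  proof (intro exI[of _ r] conjI allI impI)
    show "r \<ge> 1" by (rule r)
    fix M :: "nat \<Rightarrow> nat \<Rightarrow> 'a" assume M: "\<forall>i<r. \<forall>j<n. M i j \<in> S"
    obtain \<alpha> s where \<alpha>: "\<alpha> \<noteq> {}" "\<alpha> \<subseteq> {..<r}" and s: "s \<in> S" "\<forall>j<n. s + (\<Sum>i\<in>\<alpha>. M i j) \<in> D"
      using rp[THEN spec[of _ M], THEN mp, OF M] by (elim exE conjE bexE)
    have "\<forall>j<n. s + (\<Sum>i\<in>\<alpha>. M i j) \<in> D'" using s(2) assms(2) by blast
    then show "\<exists>\<alpha>. \<alpha> \<noteq> {} \<and> \<alpha> \<subseteq> {..<r} \<and> (\<exists>s\<in>S. \<forall>j<n. s + (\<Sum>i\<in>\<alpha>. M i j) \<in> D')"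
      using \<alpha> s(1) by blast
  qed
qed

lemma CR_empty:
  assumes "x0 \<in> S"
  shows "\<not> CR_set S {}"
proof
  assume "CR_set S {}"
  then have all: "\<forall>n::nat. n \<ge> 1 \<longrightarrow> (\<exists>r\<ge>(1::nat). \<forall>M::nat \<Rightarrow> nat \<Rightarrow> 'a. (\<forall>i<r. \<forall>j<n. M i j \<in> S) \<longrightarrow>
      (\<exists>\<alpha>. \<alpha> \<noteq> {} \<and> \<alpha> \<subseteq> {..<r} \<and> (\<exists>s\<in>S. \<forall>j<n. s + (\<Sum>i\<in>\<alpha>. M i j) \<in> {})))"
    unfolding CR_set_def by (elim conjE)
  have "(1::nat) \<ge> 1 \<longrightarrow> (\<exists>r\<ge>(1::nat). \<forall>M::nat \<Rightarrow> nat \<Rightarrow> 'a. (\<forall>i<r. \<forall>j<1. M i j \<in> S) \<longrightarrow>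
      (\<exists>\<alpha>. \<alpha> \<noteq> {} \<and> \<alpha> \<subseteq> {..<r} \<and> (\<exists>s\<in>S. \<forall>j<1. s + (\<Sum>i\<in>\<alpha>. M i j) \<in> {})))"
    using all by (rule spec)
  then have "\<exists>r\<ge>(1::nat). \<forall>M::nat \<Rightarrow> nat \<Rightarrow> 'a. (\<forall>i<r. \<forall>j<1. M i j \<in> S) \<longrightarrow>
      (\<exists>\<alpha>. \<alpha> \<noteq> {} \<and> \<alpha> \<subseteq> {..<r} \<and> (\<exists>s\<in>S. \<forall>j<1. s + (\<Sum>i\<in>\<alpha>. M i j) \<in> {}))"
    by (rule mp) (rule order_refl)
  then obtain r :: nat where rp: "\<forall>M::nat \<Rightarrow> nat \<Rightarrow> 'a. (\<forall>i<r. \<forall>j<1. M i j \<in> S) \<longrightarrow>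
      (\<exists>\<alpha>. \<alpha> \<noteq> {} \<and> \<alpha> \<subseteq> {..<r} \<and> (\<exists>s\<in>S. \<forall>j<1. s + (\<Sum>i\<in>\<alpha>. M i j) \<in> {}))"
    by blast
  have M0: "\<forall>i<r. \<forall>j<(1::nat). (\<lambda>_ _. x0) i j \<in> S" using assms by simp
  have imp: "(\<forall>i<r. \<forall>j<(1::nat). (\<lambda>_ _. x0) i j \<in> S) \<longrightarrow> (\<exists>\<alpha>. \<alpha> \<noteq> {} \<and> \<alpha> \<subseteq> {..<r} \<and> (\<exists>s\<in>S. \<forall>j<(1::nat). s + (\<Sum>i\<in>\<alpha>. (\<lambda>_ _. x0) i j) \<in> ({}::'a set)))"
    using rp by (rule spec)
  from imp M0 show False by blast
qed

lemma CR_translate: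
  assumes cl: "\<forall>x\<in>S. \<forall>y\<in>S. x + y \<in> S"
    and "a \<in> S" "CR_set S E" "D \<subseteq> S" "\<forall>b\<in>E. a + b \<in> (D::'a::comm_monoid_add set)"
  shows "CR_set S D"
  unfolding CR_set_def
proof (intro conjI allI impI)
  show "D \<subseteq> S" by (rule assms(4))
  fix n :: nat assume n: "n \<ge> 1"
  obtain r :: nat where r: "r \<ge> 1" and rp: "\<forall>M :: nat \<Rightarrow> nat \<Rightarrow> 'a. (\<forall>i<r. \<forall>j<n. M i j \<in> S) \<longrightarrow>
           (\<exists>\<alpha>. \<alpha> \<noteq> {} \<and> \<alpha> \<subseteq> {..<r} \<and> (\<exists>s\<in>S. \<forall>j<n. s + (\<Sum>i\<in>\<alpha>. M i j) \<in> E))"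
    using assms(3) n unfolding CR_set_def by blast
  show "\<exists>r\<ge>(1::nat). \<forall>M. (\<forall>i<r. \<forall>j<n. M i j \<in> S) \<longrightarrow>
           (\<exists>\<alpha>. \<alpha> \<noteq> {} \<and> \<alpha> \<subseteq> {..<r} \<and> (\<exists>s\<in>S. \<forall>j<n. s + (\<Sum>i\<in>\<alpha>. M i j) \<in> D))"
  proof (intro exI[of _ r] conjI allI impI)
    show "r \<ge> 1" by (rule r)
    fix M :: "nat \<Rightarrow> nat \<Rightarrow> 'a" assume M: "\<forall>i<r. \<forall>j<n. M i j \<in> S"
    obtain \<alpha> s where \<alpha>: "\<alpha> \<noteq> {}" "\<alpha> \<subseteq> {..<r}" and s: "s \<in> S" "\<forall>j<n. s + (\<Sum>i\<in>\<alpha>. M i j) \<in> E"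
      using rp[THEN spec[of _ M], THEN mp, OF M] by (elim exE conjE bexE)
    have as: "a + s \<in> S" using cl assms(2) s(1) by blast
    have "\<forall>j<n. (a + s) + (\<Sum>i\<in>\<alpha>. M i j) \<in> D"
    proof (intro allI impI)
      fix j assume "j < n"
      then have "a + (s + (\<Sum>i\<in>\<alpha>. M i j)) \<in> D" using s(2) assms(5) by blast
      then show "(a + s) + (\<Sum>i\<in>\<alpha>. M i j) \<in> D" by (simp add: add.assoc)
    qed
    then show "\<exists>\<alpha>. \<alpha> \<noteq> {} \<and> \<alpha> \<subseteq> {..<r} \<and> (\<exists>s\<in>S. \<forall>j<n. s + (\<Sum>i\<in>\<alpha>. M i j) \<in> D)"
      using \<alpha> as by blast
  qed
qed

lemma PR_finite:
  fixes S :: "'a::comm_monoid_add set"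
  assumes cl: "\<forall>x\<in>S. \<forall>y\<in>S. x + y \<in> S" and x0: "x0 \<in> S"
    and "finite ND" "\<forall>D\<in>ND. D \<subseteq> S \<and> \<not> CR_set S D"
  shows "\<not> CR_set S (\<Union>ND) \<and> \<Union>ND \<subseteq> S"
  using assms(3,4)
proof (induction ND rule: finite_induct)
  case empty then show ?case using CR_empty[OF x0] by simp
next
  case (insert D ND)
  then have a: "\<not> CR_set S (\<Union>ND)" "\<Union>ND \<subseteq> S" and b: "D \<subseteq> S" "\<not> CR_set S D" by auto
  have "\<not> CR_set S (D \<union> \<Union>ND)" by (rule PR[OF cl b(1) b(2) a(2) a(1)])
  then show ?case using a b by simp
qed

lemma P_CR:
  assumes BS: "B \<subseteq> posnat" and CRB: "CR_set posnat B"
  shows "CR_set S2 (Pset l B)"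
  unfolding CR_set_def
proof (intro conjI allI impI)
  show "Pset l B \<subseteq> S2" by (rule Pset_sub)
  fix n :: nat assume n: "n \<ge> 1"
  define L where "L = Suc l"
  have nL: "n * L \<ge> 1" using n by (simp add: L_def)
  obtain r :: nat where r: "r \<ge> 1" and rp: "\<forall>M :: nat \<Rightarrow> nat \<Rightarrow> nat. (\<forall>i<r. \<forall>j<n * L. M i j \<in> posnat) \<longrightarrow>
           (\<exists>\<alpha>. \<alpha> \<noteq> {} \<and> \<alpha> \<subseteq> {..<r} \<and> (\<exists>s\<in>posnat. \<forall>j<n * L. s + (\<Sum>i\<in>\<alpha>. M i j) \<in> B))"
    using CRB nL unfolding CR_set_def by blast
  show "\<exists>r\<ge>(1::nat). \<forall>M. (\<forall>i<r. \<forall>j<n. M i j \<in> S2) \<longrightarrow>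
           (\<exists>\<alpha>. \<alpha> \<noteq> {} \<and> \<alpha> \<subseteq> {..<r} \<and> (\<exists>s\<in>S2. \<forall>j<n. s + (\<Sum>i\<in>\<alpha>. M i j) \<in> Pset l B))"
  proof (intro exI[of _ r] conjI allI impI)
    show "r \<ge> 1" by (rule r)
    fix M :: "nat \<Rightarrow> nat \<Rightarrow> nat \<times> nat" assume M: "\<forall>i<r. \<forall>j<n. M i j \<in> S2"
    define M' where "M' i c = fst (M i (c div L)) + (c mod L) * (snd (M i (c div L)) + 1)" for i c
    have M'p: "\<forall>i<r. \<forall>j<n * L. M' i j \<in> posnat"
    proof (intro allI impI)
      fix i j assume "i < r" "j < n * L"
      then have "j div L < n" by (simp add: less_mult_imp_div_less)
      then have "M i (j div L) \<in> S2" using M \<open>i < r\<close> by blast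
      then show "M' i j \<in> posnat" by (auto simp: M'_def S2_def posnat_def)
    qed
    obtain \<alpha> s where \<alpha>: "\<alpha> \<noteq> {}" "\<alpha> \<subseteq> {..<r}" and s: "s \<in> posnat" "\<forall>c<n * L. s + (\<Sum>i\<in>\<alpha>. M' i c) \<in> B"
      using rp[THEN spec[of _ M'], THEN mp, OF M'p] by (elim exE conjE bexE)
    have finA: "finite \<alpha>" using \<alpha>(2) finite_subset by blast
    have cardA: "card \<alpha> \<ge> 1" using finA \<alpha>(1) by (simp add: Suc_le_eq card_gt_0_iff)
    define s2 where "s2 = (s, card \<alpha>)"
    have s2S: "s2 \<in> S2" using s(1) cardA by (simp add: s2_def S2_def posnat_def)
    have "\<forall>j<n. s2 + (\<Sum>i\<in>\<alpha>. M i j) \<in> Pset l B"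
    proof (intro allI impI)
      fix j assume j: "j < n"
      define X where "X = (\<Sum>i\<in>\<alpha>. fst (M i j))"
      define Y where "Y = (\<Sum>i\<in>\<alpha>. snd (M i j))"
      have sumM: "(\<Sum>i\<in>\<alpha>. M i j) = (X, Y)" by (simp add: prod_eq_iff fst_sum snd_sum X_def Y_def)
      have "s + X + k * (card \<alpha> + Y) \<in> B" if k: "k \<le> l" for k
      proof -
        define c where "c = j * L + k"
        have kL: "k < L" using k by (simp add: L_def)
        have "c < (j + 1) * L" using kL by (simp add: c_def)
        also have "\<dots> \<le> n * L" using j by (intro mult_le_mono1) simp
        finally have cn: "c < n * L" .
        have cdiv: "c div L = j" and cmod: "c mod L = k" using kL by (simp_all add: c_def)
        have "(\<Sum>i\<in>\<alpha>. M' i c) = (\<Sum>i\<in>\<alpha>. fst (M i j) + k * (snd (M i j) + 1))"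
          by (simp add: M'_def cdiv cmod)
        also have "\<dots> = X + k * (Y + card \<alpha>)"
          by (simp add: sum.distrib sum_distrib_left X_def Y_def algebra_simps)
        finally have "s + (\<Sum>i\<in>\<alpha>. M' i c) = s + X + k * (card \<alpha> + Y)" by (simp add: add.commute)
        then show ?thesis using s(2) cn by metis
      qed
      moreover have "s + X \<in> posnat" "card \<alpha> + Y \<in> posnat" using s(1) cardA by (auto simp: posnat_def)
      ultimately show "s2 + (\<Sum>i\<in>\<alpha>. M i j) \<in> Pset l B"
        by (simp add: sumM s2_def Pset_def)
    qed
    then show "\<exists>\<alpha>. \<alpha> \<noteq> {} \<and> \<alpha> \<subseteq> {..<r} \<and> (\<exists>s\<in>S2. \<forall>j<n. s + (\<Sum>i\<in>\<alpha>. M i j) \<in> Pset l B)"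
      using \<alpha> s2S by blast
  qed
qed


lemma Bstar:
  assumes pu: "ultrafilter_on posnat p" and pp: "uf_plus posnat p p = p" and B: "B \<in> p"
  shows "B \<inter> Tq posnat p B \<in> p"
proof -
  have "B \<in> uf_plus posnat p p" using pp B by simp
  then have "Tq posnat p B \<in> p" by (simp add: uf_plus_iff)
  then show ?thesis using uf_int[OF pu B] by blast
qed

lemma Pset_plus:
  assumes pu: "ultrafilter_on posnat p" and pp: "uf_plus posnat p p = p" and B: "B \<in> p"
    and u: "ultrafilter_on S2 u" "Pset l ` p \<subseteq> u"
    and v: "ultrafilter_on S2 v" "Pset l ` p \<subseteq> v"
  shows "Pset l B \<in> uf_plus S2 u v"
proof -
  define Bs where "Bs = B \<inter> Tq posnat p B"
  have Bsp: "Bs \<in> p" unfolding Bs_def by (rule Bstar[OF pu pp B])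
  have sub: "Pset l Bs \<subseteq> Tq S2 v (Pset l B)"
  proof
    fix x assume x: "x \<in> Pset l Bs"
    obtain a b where ab: "x = (a, b)" by (cases x)
    have a: "a \<in> posnat" and b: "b \<in> posnat" and abk: "\<forall>k\<le>l. a + k * b \<in> Bs"
      using x ab by (auto simp: Pset_def)
    define E where "E k = {y\<in>posnat. (a + k * b) + y \<in> B}" for k
    have Ep: "E k \<in> p" if "k \<le> l" for k
      using abk that by (auto simp: Bs_def Tq_def E_def)
    define B' where "B' = posnat \<inter> \<Inter>(E ` {..l})"
    have B'p: "B' \<in> p" unfolding B'_def
      by (rule uf_finite_inter[OF pu]) (use Ep in auto)
    have "Pset l B' \<in> v" using v(2) B'p by blast
    moreover have "Pset l B' \<subseteq> {y\<in>S2. x + y \<in> Pset l B}"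
    proof
      fix y assume y: "y \<in> Pset l B'"
      obtain c d where cd: "y = (c, d)" by (cases y)
      have c: "c \<in> posnat" and d: "d \<in> posnat" and cdk: "\<forall>k\<le>l. c + k * d \<in> B'"
        using y cd by (auto simp: Pset_def)
      have "(a + c) + k * (b + d) \<in> B" if k: "k \<le> l" for k
      proof -
        have "c + k * d \<in> E k" using cdk k by (auto simp: B'_def)
        then have "(a + k * b) + (c + k * d) \<in> B" by (simp add: E_def)
        moreover have "(a + k * b) + (c + k * d) = (a + c) + k * (b + d)" by (simp add: algebra_simps)
        ultimately show ?thesis by simp
      qed
      moreover have "a + c \<in> posnat" "b + d \<in> posnat" using a c b d by (auto simp: posnat_def)
      ultimately have "(a + c, b + d) \<in> Pset l B" by (simp add: Pset_def)
      moreover have "y \<in> S2" using c d cd by (simp add: S2_def)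
      ultimately show "y \<in> {y\<in>S2. x + y \<in> Pset l B}" using ab cd by simp
    qed
    ultimately have "{y\<in>S2. x + y \<in> Pset l B} \<in> v" using uf_up[OF v(1)] by blast
    moreover have "x \<in> S2" using a b ab by (simp add: S2_def)
    ultimately show "x \<in> Tq S2 v (Pset l B)" by (simp add: Tq_def)
  qed
  have "Pset l Bs \<in> u" using u(2) Bsp by blast
  then have "Tq S2 v (Pset l B) \<in> u" using uf_up[OF u(1) _ sub Tq_sub] by blast
  then show ?thesis using Pset_sub by (simp add: uf_plus_iff)
qed

theorem theorem9:
  fixes A :: "nat set" and l :: nat
  assumes "A \<subseteq> posnat"
    and "essential_CR posnat A"
    and "l \<in> posnat"
  shows "essential_CR (posnat \<times> posnat)
           {(a, b). a \<in> posnat \<and> b \<in> posnat \<and> (\<forall>k\<le>l. a + k * b \<in> A)}"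
proof -
  obtain p where pB: "p \<in> beta_CR posnat" and pp: "uf_plus posnat p p = p" and Ap: "A \<in> p"
    using assms(2) unfolding essential_CR_def by blast
  have pu: "ultrafilter_on posnat p" and pCR: "\<forall>B\<in>p. CR_set posnat B"
    using pB by (auto simp: beta_CR_def)
  define NC where "NC = {X. \<exists>D. X = S2 - D \<and> D \<subseteq> S2 \<and> \<not> CR_set S2 D}"
  define K0 where "K0 = Pset l ` p \<union> NC"
  define Hs where "Hs = {u. ultrafilter_on S2 u \<and> K0 \<subseteq> u}"
  have K0S: "K0 \<subseteq> Pow S2" using Pset_sub by (auto simp: K0_def NC_def)
  have Hc: "closedU S2 Hs" unfolding Hs_def by (rule closed_Kset[OF K0S])
  have allCR: "CR_set S2 F" if u: "ultrafilter_on S2 u" "K0 \<subseteq> u" and F: "F \<in> u" for u F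
  proof (rule ccontr)
    assume nF: "\<not> CR_set S2 F"
    have FS: "F \<subseteq> S2" using uf_sub[OF u(1) F] .
    then have "S2 - F \<in> K0" using nF by (auto simp: K0_def NC_def)
    then have "S2 - F \<in> u" using u(2) by blast
    then show False using uf_compl_iff[OF u(1) FS] F by simp
  qed
  have claim: "finite G \<Longrightarrow> G \<subseteq> K0 \<Longrightarrow> \<exists>B\<in>p. \<exists>ND. finite ND \<and> (\<forall>D\<in>ND. D \<subseteq> S2 \<and> \<not> CR_set S2 D)
      \<and> Pset l B - \<Union>ND \<subseteq> S2 \<inter> \<Inter>G" for G
  proof (induction G rule: finite_induct)
    case empty
    show ?case
      by (rule bexI[of _ posnat], rule exI[of _ "{}"]) (use Pset_sub uf_S[OF pu] in auto)
  next
    case (insert g G)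
    then obtain B ND where B: "B \<in> p" and ND: "finite ND" "\<forall>D\<in>ND. D \<subseteq> S2 \<and> \<not> CR_set S2 D"
      and sub: "Pset l B - \<Union>ND \<subseteq> S2 \<inter> \<Inter>G" by auto
    have "g \<in> K0" using insert by auto
    then consider (P) B' where "B' \<in> p" "g = Pset l B'" | (N) D where "g = S2 - D" "D \<subseteq> S2" "\<not> CR_set S2 D"
      by (auto simp: K0_def NC_def)
    then show ?case
    proof cases
      case P
      have "B \<inter> B' \<in> p" using uf_int[OF pu B P(1)] .
      moreover have "Pset l (B \<inter> B') - \<Union>ND \<subseteq> S2 \<inter> \<Inter>(insert g G)"
        using sub P(2) Pset_inter[of l B B'] by auto
      ultimately show ?thesis using ND by blast
    next
      case N
      have "finite (insert D ND)" "\<forall>D'\<in>insert D ND. D' \<subseteq> S2 \<and> \<not> CR_set S2 D'" using ND N by auto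
      moreover have "Pset l B - \<Union>(insert D ND) \<subseteq> S2 \<inter> \<Inter>(insert g G)"
        using sub N(1) Pset_sub by auto
      ultimately show ?thesis using B by blast
    qed
  qed
  have "fip S2 K0"
    unfolding fip_def
  proof (intro allI impI)
    fix G assume G: "finite G \<and> G \<subseteq> K0"
    then obtain B ND where B: "B \<in> p" and ND: "finite ND" "\<forall>D\<in>ND. D \<subseteq> S2 \<and> \<not> CR_set S2 D"
      and sub: "Pset l B - \<Union>ND \<subseteq> S2 \<inter> \<Inter>G" using claim[OF conjunct1[OF G] conjunct2[OF G]] by blast
    have BCR: "CR_set S2 (Pset l B)"
      using P_CR[OF uf_sub[OF pu B]] pCR B by blast
    have NDn: "\<not> CR_set S2 (\<Union>ND)" and NDS: "\<Union>ND \<subseteq> S2"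
      using PR_finite[OF cl2 S2_ne ND] by auto
    have "Pset l B - \<Union>ND \<noteq> {}"
    proof
      assume "Pset l B - \<Union>ND = {}"
      then have "Pset l B \<subseteq> \<Union>ND" by blast
      then have "CR_set S2 (\<Union>ND)" by (rule CR_super[OF BCR _ NDS])
      then show False using NDn by simp
    qed
    then show "S2 \<inter> \<Inter>G \<noteq> {}" using sub by blast
  qed
  then obtain u0 where u0: "ultrafilter_on S2 u0" "K0 \<subseteq> u0" using ultrafilter_exists[OF K0S] by blast
  have Hne: "Hs \<noteq> {}" using u0 by (auto simp: Hs_def)
  have semi: "\<forall>u\<in>Hs. \<forall>v\<in>Hs. uf_plus S2 u v \<in> Hs"
  proof (intro ballI)
    fix u v assume uH: "u \<in> Hs" and vH: "v \<in> Hs"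
    have u: "ultrafilter_on S2 u" "K0 \<subseteq> u" and v: "ultrafilter_on S2 v" "K0 \<subseteq> v"
      using uH vH by (auto simp: Hs_def)
    define w where "w = uf_plus S2 u v"
    have wu: "ultrafilter_on S2 w" unfolding w_def by (rule uf_plus_uf[OF cl2 u(1) v(1)])
    have wCR: "CR_set S2 F" if F: "F \<in> w" for F
    proof -
      have FS: "F \<subseteq> S2" and T: "Tq S2 v F \<in> u" using F by (auto simp: w_def uf_plus_iff)
      then obtain a where a: "a \<in> Tq S2 v F" using uf_nonempty[OF u(1)] by blast
      then have aS: "a \<in> S2" and E: "{y\<in>S2. a + y \<in> F} \<in> v" by (auto simp: Tq_def)
      have "CR_set S2 {y\<in>S2. a + y \<in> F}" by (rule allCR[OF v E])
      then show ?thesis by (rule CR_translate[OF cl2 aS _ FS]) simp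
    qed
    have "K0 \<subseteq> w"
    proof
      fix X assume "X \<in> K0"
      then consider (P) B where "B \<in> p" "X = Pset l B" | (N) D where "X = S2 - D" "D \<subseteq> S2" "\<not> CR_set S2 D"
        by (auto simp: K0_def NC_def)
      then show "X \<in> w"
      proof cases
        case P
        have "Pset l ` p \<subseteq> u" "Pset l ` p \<subseteq> v" using u(2) v(2) by (auto simp: K0_def)
        then show ?thesis using Pset_plus[OF pu pp P(1) u(1) _ v(1)] P(2) by (simp add: w_def)
      next
        case N
        have "D \<notin> w" using wCR N(3) by blast
        then show ?thesis using uf_compl_iff[OF wu N(2)] N(1) by simp
      qed
    qed
    then show "uf_plus S2 u v \<in> Hs" using wu by (simp add: Hs_def w_def)
  qed
  obtain e where eH: "e \<in> Hs" and ee: "uf_plus S2 e e = e" using ellis[OF cl2 Hc Hne semi] by blast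
  have eu: "ultrafilter_on S2 e" and eK: "K0 \<subseteq> e" using eH by (auto simp: Hs_def)
  have "e \<in> beta_CR S2" using eu allCR[OF eu eK] by (simp add: beta_CR_def)
  moreover have "Pset l A \<in> e" using eK Ap by (auto simp: K0_def)
  ultimately have "essential_CR S2 (Pset l A)" using ee unfolding essential_CR_def by blast
  then show ?thesis by (simp add: S2_def Pset_def)
qed


end
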